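(* Let $q>2$ be a prime power, $m\ge1$, $n=q^m-1=r_1r_2$ with $r_1,r_2>1$, $\gcd(r_1,r_2)=1$, $r_1=q^a-1$ for some natural number $a$, and $m=ab$. Fix a generator $\alpha$ of $\mathbb{F}_{q^m}^*$ and a group isomorphism $T:\mathbb{Z}_n\to\mathbb{Z}_{r_1}\times\mathbb{Z}_{r_2}$. Let $\Gamma=\gamma_1\cup\gamma_2\cup\gamma_3\subseteq\mathbb{Z}_{r_1}\times\mathbb{Z}_{r_2}$ where $\gamma_1=\{(i_1,i_2)\mid 0\le i_1<\frac{a(a-1)}{2},\ 0\le i_2<b^2\}$, $\gamma_2=\{(i_1,i_2)\mid \frac{a(a-1)}{2}\le i_1<\frac{a(a+1)}{2},\ 0\le i_2<\frac{b(b+1)}{2}\}$, $\gamma_3=\{(i_1,i_2)\mid \frac{a(a+1)}{2}\le i_1<\frac{a(a+3)}{2},\ 0\le i_2<b\}$. Then $\{0\}\cup\{\alpha^i\mid i\in T^{-1}(\Gamma)\}\subseteq\mathbb{F}_{q^m}$ is an information set for $R_q(2,m)$, and $\{\alpha^i\mid i\in\mathbb{Z}_n,\ i\notin T^{-1}(\Gamma)\}$ is an information set for $R_q(m(q-1)-3,m)$.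
   Context: $\mathbb{F}=\mathbb{F}_q$; elements of $\mathbb{Z}_r$ are identified with integers $0,\dots,r-1$. $\mathrm{wt}_q(k)$ is the sum of the base-$q$ digits of $k$. Let $G$ be the additive group of $\mathbb{F}_{q^m}$; words of length $q^m$ are vectors in $\mathbb{F}^G$, written $bX^0+\sum_{i=0}^{n-1}a_iX^{\alpha^i}$ (coordinates $0$ and $\alpha^i$). For $0<\rho\le m(q-1)$, the generalized Reed–Muller code $R_q(\rho,m)$ consists of the words with $b\cdot0^s+\sum_i a_i\alpha^{is}=0$ for all $0\le s<q^m-1$ with $\mathrm{wt}_q(s)<m(q-1)-\rho$ ($0^0=1$). For a linear code of dimension $k$ on coordinate set $P$, an information set is $I\subseteq P$ with $|I|=k$ such that the projection of the code onto $I$ is all of $\mathbb{F}^k$. *)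

theory Defs
  imports "HOL-Computational_Algebra.Primes" "HOL-Library.FuncSet"
begin

definition prime_power :: "nat \<Rightarrow> bool" where
  "prime_power q \<longleftrightarrow> (\<exists>p k. prime p \<and> k > 0 \<and> q = p ^ k)"

text \<open>Sum of the base-q digits of s (for q at least 2; the digit of index i is
  (s div q^i) mod q, and all digits of index > s vanish).\<close>
definition wt :: "nat \<Rightarrow> nat \<Rightarrow> nat" where
  "wt q s = (\<Sum>i\<le>s. (s div q ^ i) mod q)"

definition subfield_q :: "nat \<Rightarrow> 'e::field set" where
  "subfield_q q = {x. x ^ q = x}"

text \<open>Generalized Reed--Muller code R_q(rho,m) over F_q, with coordinates indexed
  by the elements of the field 'e of order q^m (the additive group G).
  A word is a function c : 'e \<Rightarrow> F_q; c 0 = b and c (alpha^i) = a_i. The check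
  b 0^s + \<Sum> a_i alpha^(is) equals \<Sum>x. c x * x^s (with 0^0 = 1).\<close>
definition GRM :: "nat \<Rightarrow> nat \<Rightarrow> nat \<Rightarrow> ('e::{finite,field} \<Rightarrow> 'e) set" where
  "GRM q \<rho> m = {c. (\<forall>x. c x \<in> subfield_q q) \<and>
      (\<forall>s. s < q ^ m - 1 \<and> wt q s < m * (q - 1) - \<rho> \<longrightarrow>
           (\<Sum>x\<in>UNIV. c x * x ^ s) = 0)}"

definition code_dim :: "'a set \<Rightarrow> ('c \<Rightarrow> 'a) set \<Rightarrow> nat" where
  "code_dim F C = (THE k. card C = card F ^ k)"

definition info_set :: "'a set \<Rightarrow> ('c \<Rightarrow> 'a) set \<Rightarrow> 'c set \<Rightarrow> bool" where
  "info_set F C I \<longleftrightarrow> finite I \<and> card I = code_dim F C \<and>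
      (\<lambda>c. restrict c I) ` C = (I \<rightarrow>\<^sub>E F)"

end

theory Submission
  imports Defs "HOL-Computational_Algebra.Polynomial"
begin

function wtr :: "nat \<Rightarrow> nat \<Rightarrow> nat" where
  "wtr q s = (if s = 0 \<or> q < 2 then 0 else s mod q + wtr q (s div q))"
  by auto
termination by (relation "measure (\<lambda>(q,s). s)") auto

declare wtr.simps[simp del]

lemma wtr_rec: "q \<ge> 2 \<Longrightarrow> wtr q s = s mod q + wtr q (s div q)"
  by (cases "s = 0") (subst wtr.simps, simp)+

lemma wtr_0[simp]: "wtr q 0 = 0"
  by (subst wtr.simps) simp

lemma digsum_ext:
  assumes q: "q \<ge> 2" and "s \<le> N"
  shows "(\<Sum>i\<le>N. (s div q ^ i) mod q) = (\<Sum>i\<le>s. (s div q ^ i) mod q)"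
proof (rule sum.mono_neutral_right)
  show "\<forall>i\<in>{..N} - {..s}. s div q ^ i mod q = 0"
  proof
    fix i assume "i \<in> {..N} - {..s}"
    hence "i > s" by auto
    have "s < 2 ^ s" by (rule less_exp)
    also have "\<dots> \<le> 2 ^ i" using \<open>i > s\<close> by (intro power_increasing) auto
    also have "\<dots> \<le> q ^ i" using q by (intro power_mono) auto
    finally show "s div q ^ i mod q = 0" by simp
  qed
qed (use assms in auto)

lemma wt_eq_wtr: assumes q: "q \<ge> 2" shows "wt q s = wtr q s"
proof (induction s rule: less_induct)
  case (less s)
  show ?case
  proof (cases s)
    case 0 then show ?thesis by (simp add: wt_def)
  next
    case (Suc k)
    have "wt q s = (\<Sum>i\<le>Suc k. (s div q ^ i) mod q)" by (simp add: wt_def Suc)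
    also have "\<dots> = s mod q + (\<Sum>i\<le>k. (s div q ^ Suc i) mod q)"
      by (subst sum.atMost_Suc_shift) simp
    also have "(\<Sum>i\<le>k. (s div q ^ Suc i) mod q) = (\<Sum>i\<le>k. ((s div q) div q ^ i) mod q)"
      by (simp add: div_mult2_eq)
    also have "\<dots> = (\<Sum>i\<le>s div q. ((s div q) div q ^ i) mod q)"
    proof (rule digsum_ext[OF q])
      have "s div q < s" using Suc q by (intro div_less_dividend) auto
      thus "s div q \<le> k" using Suc by simp
    qed
    also have "\<dots> = wt q (s div q)" by (simp add: wt_def)
    also have "\<dots> = wtr q (s div q)"
      using Suc q by (intro less.IH div_less_dividend) auto
    finally show ?thesis using wtr_rec[OF q, of s] by simp
  qed
qed

lemma wtr_small: "q \<ge> 2 \<Longrightarrow> d < q \<Longrightarrow> wtr q d = d"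
  by (subst wtr_rec) auto

lemma wtr_mult: "q \<ge> 2 \<Longrightarrow> wtr q (q * x) = wtr q x"
  by (subst wtr_rec) auto

lemma wtr_digit: "q \<ge> 2 \<Longrightarrow> d < q \<Longrightarrow> wtr q (d + q * y) = d + wtr q y"
  by (subst wtr_rec) auto

lemma wtr_pow: "q \<ge> 2 \<Longrightarrow> wtr q (q ^ j) = 1"
  by (induction j) (auto simp: wtr_mult wtr_small)

lemma wtr_pow2:
  assumes q: "q > 2" shows "j \<le> k \<Longrightarrow> wtr q (q ^ j + q ^ k) = 2"
proof (induction j arbitrary: k)
  case 0
  show ?case
  proof (cases k)
    case 0 then show ?thesis using q by (simp add: wtr_small)
  next
    case (Suc k')
    have "wtr q (1 + q ^ k) = (1 + q ^ k) mod q + wtr q ((1 + q ^ k) div q)"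
      using q by (intro wtr_rec) auto
    have "1 + q ^ k = 1 + q * q ^ k'" using Suc by simp
    hence "wtr q (1 + q ^ k) = 1 + wtr q (q ^ k')" using q wtr_digit[of q 1 "q ^ k'"] by simp
    thus ?thesis using q by (simp add: wtr_pow)
  qed
next
  case (Suc j)
  then obtain k' where k: "k = Suc k'" by (cases k) auto
  have "q ^ Suc j + q ^ k = q * (q ^ j + q ^ k')" by (simp add: k algebra_simps)
  thus ?case using Suc q k by (simp add: wtr_mult)
qed

lemma wtr_compl:
  assumes q: "q \<ge> 2"
  shows "t < q ^ m \<Longrightarrow> wtr q (q ^ m - 1 - t) + wtr q t = m * (q - 1)"
proof (induction m arbitrary: t)
  case 0 then show ?case by simp
next
  case (Suc m)
  define d where "d = t mod q"
  define t' where "t' = t div q"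
  have t: "t = d + q * t'" by (simp add: d_def t'_def)
  have d: "d < q" using q by (simp add: d_def)
  have t': "t' < q ^ m" using Suc.prems q by (simp add: t'_def less_mult_imp_div_less mult.commute)
  have X: "q ^ Suc m - 1 - t = (q - 1 - d) + q * (q ^ m - 1 - t')"
  proof -
    have "t' + 1 \<le> q ^ m" using t' by simp
    hence "q * (q ^ m - 1 - t') = q * q ^ m - q - q * t'"
      by (simp add: diff_mult_distrib2)
    moreover have "q + q * t' \<le> q * q ^ m" using \<open>t' + 1 \<le> q ^ m\<close>
      by (metis add.commute mult.commute mult_Suc mult_le_mono1 Suc_eq_plus1)
    ultimately show ?thesis using t d by (simp add: algebra_simps)
  qed
  have "wtr q (q ^ Suc m - 1 - t) = (q - 1 - d) + wtr q (q ^ m - 1 - t')"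
    unfolding X using q d by (intro wtr_digit) auto
  moreover have "wtr q t = d + wtr q t'"
    unfolding t using q d by (intro wtr_digit) auto
  ultimately show ?case using Suc.IH[OF t'] d by simp
qed

lemma wtr_class1:
  assumes q: "q \<ge> 2"
  shows "t < q ^ m \<Longrightarrow> wtr q t \<le> 1 \<Longrightarrow> t = 0 \<or> (\<exists>j<m. t = q ^ j)"
proof (induction m arbitrary: t)
  case 0 then show ?case by simp
next
  case (Suc m)
  define d where "d = t mod q"
  define t' where "t' = t div q"
  have t: "t = d + q * t'" by (simp add: d_def t'_def)
  have t': "t' < q ^ m" using Suc.prems q by (simp add: t'_def less_mult_imp_div_less mult.commute)
  have w: "wtr q t = d + wtr q t'" unfolding t using q by (intro wtr_digit) (auto simp: d_def)
  show ?case
  proof (cases "d = 0")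
    case True
    from Suc.IH[OF t'] w Suc.prems True have "t' = 0 \<or> (\<exists>j<m. t' = q ^ j)" by auto
    then show ?thesis
    proof (elim disjE exE conjE)
      fix j assume "j < m" "t' = q ^ j"
      thus ?thesis using t True by (intro disjI2 exI[of _ "Suc j"]) auto
    qed (use t True in auto)
  next
    case False
    hence "d = 1" "wtr q t' = 0" using w Suc.prems by auto
    hence "t' = 0" using Suc.IH[OF t'] q by (auto simp: wtr_pow)
    thus ?thesis using t \<open>d = 1\<close> by (auto intro!: exI[of _ 0])
  qed
qed

lemma wtr_class2:
  assumes q: "q > 2"
  shows "t < q ^ m \<Longrightarrow> wtr q t \<le> 2 \<Longrightarrow>
     t = 0 \<or> (\<exists>j<m. t = q ^ j) \<or> (\<exists>j k. j \<le> k \<and> k < m \<and> t = q ^ j + q ^ k)"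
proof (induction m arbitrary: t)
  case 0 then show ?case by simp
next
  case (Suc m)
  define d where "d = t mod q"
  define t' where "t' = t div q"
  have t: "t = d + q * t'" by (simp add: d_def t'_def)
  have t': "t' < q ^ m" using Suc.prems q by (simp add: t'_def less_mult_imp_div_less mult.commute)
  have w: "wtr q t = d + wtr q t'" unfolding t using q by (intro wtr_digit) (auto simp: d_def)
  consider "d = 0" | "d = 1" | "d = 2" using w Suc.prems by linarith
  then show ?case
  proof cases
    case 1
    from Suc.IH[OF t'] w Suc.prems 1 have
      "t' = 0 \<or> (\<exists>j<m. t' = q ^ j) \<or> (\<exists>j k. j \<le> k \<and> k < m \<and> t' = q ^ j + q ^ k)" by auto
    then show ?thesis
    proof (elim disjE exE conjE)
      fix j k assume "j \<le> k" "k < m" "t' = q ^ j + q ^ k"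
      thus ?thesis using t 1 by (intro disjI2 exI[of _ "Suc j"] exI[of _ "Suc k"]) (auto simp: algebra_simps)
    next
      fix j assume "j < m" "t' = q ^ j"
      thus ?thesis using t 1 by (intro disjI2 disjI1 exI[of _ "Suc j"]) auto
    qed (use t 1 in auto)
  next
    case 2
    hence "wtr q t' \<le> 1" using w Suc.prems by auto
    from wtr_class1[OF _ t' this] q have "t' = 0 \<or> (\<exists>j<m. t' = q ^ j)" by auto
    then show ?thesis
    proof (elim disjE exE conjE)
      fix j assume "j < m" "t' = q ^ j"
      thus ?thesis using t 2 by (intro disjI2 exI[of _ 0] exI[of _ "Suc j"]) auto
    qed (use t 2 in \<open>auto intro!: exI[of _ 0]\<close>)
  next
    case 3
    hence "wtr q t' = 0" using w Suc.prems by auto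
    hence "t' = 0" using wtr_class1[OF _ t'] q by (auto simp: wtr_pow)
    thus ?thesis using t 3 by (intro disjI2 exI[of _ 0] exI[of _ 0]) auto
  qed
qed

lemma pow_sum_unique:
  fixes q :: nat
  assumes q: "q > 2"
  shows "v \<le> w \<Longrightarrow> v' \<le> w' \<Longrightarrow> q ^ v + q ^ w = q ^ v' + q ^ w' \<Longrightarrow> v = v' \<and> w = w'"
proof (induction v arbitrary: w v' w')
  case 0
  show ?case
  proof (cases v')
    case 0
    have "q ^ w = q ^ w'" using "0.prems" 0 by simp
    with q 0 show ?thesis by simp
  next
    case (Suc v'')
    then obtain w'' where w': "w' = Suc w''" using "0" by (cases w') auto
    have "(q ^ v' + q ^ w') mod q = 0" using Suc w' by simp
    moreover have "(q ^ 0 + q ^ w) mod q \<noteq> 0"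
    proof (cases w)
      case 0 then show ?thesis using q by simp
    next
      case (Suc w1)
      have e: "q ^ 0 + q ^ w = 1 + q ^ w1 * q" using \<open>w = Suc w1\<close> by simp
      have "(1 + q ^ w1 * q) mod q = 1 mod q" by (rule mod_mult_self1)
      then show ?thesis unfolding e using q by simp
    qed
    ultimately show ?thesis using "0" by simp
  qed
next
  case (Suc v)
  then obtain w0 where w: "w = Suc w0" by (cases w) auto
  show ?case
  proof (cases v')
    case 0
    have "(q ^ Suc v + q ^ w) mod q = 0" using w by simp
    moreover have "(q ^ 0 + q ^ w') mod q \<noteq> 0"
    proof (cases w')
      case 0 then show ?thesis using q by simp
    next
      case (Suc w1)
      have e: "q ^ 0 + q ^ w' = 1 + q ^ w1 * q" using \<open>w' = Suc w1\<close> by simp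
      have "(1 + q ^ w1 * q) mod q = 1 mod q" by (rule mod_mult_self1)
      then show ?thesis unfolding e using q by simp
    qed
    moreover have "q ^ Suc v + q ^ w = q ^ 0 + q ^ w'" using Suc.prems 0 by simp
    ultimately show ?thesis by metis
  next
    case (Suc v'')
    then obtain w'' where w': "w' = Suc w''" using Suc.prems by (cases w') auto
    have "q * (q ^ v + q ^ w0) = q * (q ^ v'' + q ^ w'')"
      using Suc.prems w w' Suc by (simp add: algebra_simps)
    hence "q ^ v + q ^ w0 = q ^ v'' + q ^ w''" using q by simp
    from Suc.IH[OF _ _ this] Suc.prems w w' Suc show ?thesis by simp
  qed
qed

lemma pow_ne_pow_sum:
  fixes q :: nat
  assumes q: "q > 2" shows "q ^ u \<noteq> q ^ v + q ^ w"
proof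
  assume h: "q ^ u = q ^ v + q ^ w"
  have "wtr q (q ^ v + q ^ w) = 2"
    using q wtr_pow2[OF q, of v w] wtr_pow2[OF q, of w v] by (cases "v \<le> w") (auto simp: add.commute)
  moreover have "wtr q (q ^ u) = 1" using q by (intro wtr_pow) auto
  ultimately show False using h by simp
qed



locale grmctx =
  fixes q m n r1 r2 a b :: nat
    and \<alpha> :: "'e::{finite,field}"
    and T :: "nat \<Rightarrow> nat \<times> nat"
    and \<Gamma> :: "(nat \<times> nat) set"
  assumes pp: "prime_power q" and q2: "q > 2" and m1: "m \<ge> 1"
    and cardF: "card (UNIV :: 'e set) = q ^ m"
    and n_def: "n = q ^ m - 1" and n_r: "n = r1 * r2" and r1g: "r1 > 1" and r2g: "r2 > 1"
    and cop: "coprime r1 r2" and r1_def: "r1 = q ^ a - 1" and m_def: "m = a * b"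
    and gen: "(\<lambda>i. \<alpha> ^ i) ` {..<n} = UNIV - {0}"
    and Tbij: "bij_betw T {..<n} ({..<r1} \<times> {..<r2})"
    and Thom: "\<forall>i<n. \<forall>j<n. T ((i + j) mod n) =
           ((fst (T i) + fst (T j)) mod r1, (snd (T i) + snd (T j)) mod r2)"
    and Gam: "\<Gamma> = {(i1, i2). i1 < a * (a - 1) div 2 \<and> i2 < b ^ 2}
          \<union> {(i1, i2). a * (a - 1) div 2 \<le> i1 \<and> i1 < a * (a + 1) div 2 \<and> i2 < b * (b + 1) div 2}
          \<union> {(i1, i2). a * (a + 1) div 2 \<le> i1 \<and> i1 < a * (a + 3) div 2 \<and> i2 < b}"
begin

lemma q_ge: "q \<ge> 3" "q \<ge> 2" "q > 1" "q > 0" using q2 by auto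

lemma Q_pos: "q ^ m \<ge> 1" using q_ge by simp

lemma n_Q: "n + 1 = q ^ m" using Q_pos n_def by simp

lemma n_ge: "n \<ge> 4"
proof -
  have "r1 \<ge> 2" "r2 \<ge> 2" using r1g r2g by auto
  hence "r1 * r2 \<ge> 2 * 2" by (intro mult_mono) auto
  thus ?thesis using n_r by simp
qed

lemma a_ge: "a \<ge> 1"
  using r1g r1_def by (cases a) auto

lemma b_ge: "b \<ge> 2"
proof (rule ccontr)
  assume "\<not> b \<ge> 2"
  hence "b = 0 \<or> b = 1" by auto
  thus False
  proof
    assume "b = 0" thus False using m1 m_def by simp
  next
    assume "b = 1"
    hence "r1 = n" using r1_def m_def n_def by simp
    moreover have "r1 * 2 \<le> r1 * r2" using r2g by simp
    ultimately show False using n_r r1g by simp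
  qed
qed

lemma m_ge: "m \<ge> 2"
proof -
  have "a * b \<ge> 1 * 2" using a_ge b_ge by (intro mult_mono) auto
  thus ?thesis using m_def by simp
qed

lemma n_pos: "n > 0" using n_ge by simp

lemma card_nonzero: "card (UNIV - {0::'e}) = n"
  using cardF n_def by (simp add: card_Diff_subset)

lemma alpha_inj: "inj_on (\<lambda>i. \<alpha> ^ i) {..<n}"
  using gen card_nonzero by (intro eq_card_imp_inj_on) auto

lemma alpha_nz: "\<alpha> \<noteq> 0"
proof
  assume "\<alpha> = 0"
  have "\<alpha> ^ 1 \<in> (\<lambda>i. \<alpha> ^ i) ` {..<n}" using n_ge by (intro image_eqI[of _ _ 1]) auto
  thus False using gen \<open>\<alpha> = 0\<close> by auto
qed

lemma alpha_n: "\<alpha> ^ n = 1"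
proof -
  have "\<alpha> ^ n \<in> UNIV - {0}" using alpha_nz by simp
  then obtain j where j: "j < n" "\<alpha> ^ n = \<alpha> ^ j" using gen by (metis imageE lessThan_iff)
  show ?thesis
  proof (cases "j = 0")
    case True then show ?thesis using j by simp
  next
    case False
    have "\<alpha> ^ (n - j) * \<alpha> ^ j = \<alpha> ^ j" using j by (simp flip: power_add)
    hence e: "\<alpha> ^ (n - j) = \<alpha> ^ 0" using alpha_nz by simp
    have "n - j \<in> {..<n}" "0 \<in> {..<n}" using False j by auto
    from inj_onD[OF alpha_inj e this] have "n - j = 0" .
    thus ?thesis using j by simp
  qed
qed

lemma alpha_pow_mod: "\<alpha> ^ i = \<alpha> ^ (i mod n)"
proof -
  have "\<alpha> ^ i = \<alpha> ^ (n * (i div n) + i mod n)" by simp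
  also have "\<dots> = (\<alpha> ^ n) ^ (i div n) * \<alpha> ^ (i mod n)" by (simp only: power_add power_mult)
  also have "\<dots> = \<alpha> ^ (i mod n)" by (simp add: alpha_n)
  finally show ?thesis .
qed

lemma alpha_pow_eq: "\<alpha> ^ i = \<alpha> ^ j \<longleftrightarrow> i mod n = j mod n"
proof
  assume "\<alpha> ^ i = \<alpha> ^ j"
  hence "\<alpha> ^ (i mod n) = \<alpha> ^ (j mod n)" by (simp flip: alpha_pow_mod)
  thus "i mod n = j mod n" using alpha_inj n_pos by (auto dest: inj_onD)
next
  assume "i mod n = j mod n" thus "\<alpha> ^ i = \<alpha> ^ j" by (metis alpha_pow_mod)
qed

lemma nonzero_alpha: "x \<noteq> 0 \<Longrightarrow> \<exists>i<n. x = \<alpha> ^ i"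
proof -
  assume "x \<noteq> 0"
  hence "x \<in> (\<lambda>i. \<alpha> ^ i) ` {..<n}" using gen by simp
  thus ?thesis by auto
qed

lemma UNIV_alpha: "(UNIV :: 'e set) = insert 0 ((\<lambda>i. \<alpha> ^ i) ` {..<n})"
  using gen by auto

lemma pow_n: "(x::'e) \<noteq> 0 \<Longrightarrow> x ^ n = 1"
proof -
  assume "x \<noteq> 0"
  then obtain i where "x = \<alpha> ^ i" using nonzero_alpha by auto
  thus ?thesis by (simp flip: power_mult add: mult.commute[of i] power_mult alpha_n)
qed

lemma pow_mod_n: "(x::'e) \<noteq> 0 \<Longrightarrow> x ^ i = x ^ (i mod n)"
proof -
  assume x: "x \<noteq> 0"
  have "x ^ i = x ^ (n * (i div n) + i mod n)" by simp
  also have "\<dots> = (x ^ n) ^ (i div n) * x ^ (i mod n)" by (simp only: power_add power_mult)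
  also have "\<dots> = x ^ (i mod n)" by (simp add: pow_n[OF x])
  finally show ?thesis .
qed

lemma pow_Q: "(x::'e) ^ (q ^ m) = x"
proof (cases "x = 0")
  case True then show ?thesis using q_ge by simp
next
  case False
  have "x ^ (q ^ m) = x ^ (n + 1)" using n_Q by simp
  also have "\<dots> = x" using pow_n[OF False] by simp
  finally show ?thesis .
qed

lemma of_nat_Q: "(of_nat (q ^ m) :: 'e) = 0"
proof -
  have inj: "inj (\<lambda>y::'e. y + 1)" by (auto intro: injI)
  have surj: "range (\<lambda>y::'e. y + 1) = UNIV" by (auto intro: image_eqI[of _ _ "_ - 1"])
  have "(\<Sum>y\<in>UNIV. y) = (\<Sum>y\<in>range (\<lambda>y::'e. y + 1). y)" using surj by simp
  also have "\<dots> = (\<Sum>y\<in>UNIV. y + 1)" by (subst sum.reindex[OF inj]) simp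
  also have "\<dots> = (\<Sum>y\<in>UNIV. y) + of_nat (card (UNIV :: 'e set))"
    by (simp add: sum.distrib)
  finally show ?thesis using cardF by simp
qed

lemma of_nat_n: "(of_nat n :: 'e) = -1"
proof -
  have "(of_nat (n + 1) :: 'e) = 0" using of_nat_Q n_Q by simp
  thus ?thesis by (simp add: eq_neg_iff_add_eq_0 add.commute)
qed

lemma char_info: "\<exists>k. q = CHAR('e) ^ k \<and> prime CHAR('e)"
proof -
  obtain p k where pk: "prime p" "k > 0" "q = p ^ k" using pp unfolding prime_power_def by auto
  have "(of_nat p :: 'e) ^ (k * m) = of_nat (q ^ m)" using pk by (simp add: power_mult)
  hence "(of_nat p :: 'e) ^ (k * m) = 0" using of_nat_Q by simp
  hence "(of_nat p :: 'e) = 0" by simp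
  hence "CHAR('e) dvd p" by (simp add: of_nat_eq_0_iff_char_dvd)
  hence "CHAR('e) = p" using pk(1) CHAR_not_1' unfolding prime_nat_iff by auto
  thus ?thesis using pk by auto
qed

lemma frob_add: "((x::'e) + y) ^ q = x ^ q + y ^ q"
  using char_info freshmans_dream' by blast

lemma frob_sum: "(sum (f :: _ \<Rightarrow> 'e) A) ^ q = sum (\<lambda>i. f i ^ q) A"
  using char_info freshmans_dream_sum' by blast

definition K :: "'e set" where "K = subfield_q q"

lemma K_iff: "x \<in> K \<longleftrightarrow> x ^ q = x" by (simp add: K_def subfield_q_def)

lemma K_0: "0 \<in> K" using q_ge by (simp add: K_iff)
lemma K_1: "1 \<in> K" by (simp add: K_iff)
lemma K_add: "x \<in> K \<Longrightarrow> y \<in> K \<Longrightarrow> x + y \<in> K" by (simp add: K_iff frob_add)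
lemma K_mult: "x \<in> K \<Longrightarrow> y \<in> K \<Longrightarrow> x * y \<in> K" by (simp add: K_iff power_mult_distrib)
lemma K_neg: "x \<in> K \<Longrightarrow> - x \<in> K"
proof -
  assume "x \<in> K"
  have "(- x + x) ^ q = (- x) ^ q + x ^ q" by (rule frob_add)
  moreover have "(0::'e) ^ q = 0" using q_ge by simp
  ultimately have "(- x) ^ q + x ^ q = 0" by simp
  hence "(- x) ^ q = - (x ^ q)" by (simp add: eq_neg_iff_add_eq_0)
  thus ?thesis using \<open>x \<in> K\<close> by (simp add: K_iff)
qed
lemma K_sum: "(\<And>i. i \<in> A \<Longrightarrow> f i \<in> K) \<Longrightarrow> sum f A \<in> K"
  by (induction A rule: infinite_finite_induct) (auto intro: K_add K_0)

lemma power_sum_UNIV: "(\<Sum>x\<in>(UNIV::'e set). x ^ u) = (if 0 < u \<and> n dvd u then -1 else 0)"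
proof -
  have nz: "0 \<notin> (\<lambda>i. \<alpha> ^ i) ` {..<n}" using alpha_nz by auto
  have "(\<Sum>x\<in>(UNIV::'e set). x ^ u) = 0 ^ u + (\<Sum>x\<in>(\<lambda>i. \<alpha> ^ i) ` {..<n}. x ^ u)"
    by (subst UNIV_alpha, subst sum.insert) (use nz in auto)
  also have "(\<Sum>x\<in>(\<lambda>i. \<alpha> ^ i) ` {..<n}. x ^ u) = (\<Sum>i<n. (\<alpha> ^ u) ^ i)"
    by (subst sum.reindex[OF alpha_inj]) (simp add: power_mult[symmetric] mult.commute)
  finally have e: "(\<Sum>x\<in>(UNIV::'e set). x ^ u) = 0 ^ u + (\<Sum>i<n. (\<alpha> ^ u) ^ i)" .
  show ?thesis
  proof (cases "n dvd u")
    case True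
    then obtain k where "u = n * k" by auto
    hence "\<alpha> ^ u = 1" by (simp add: power_mult alpha_n)
    thus ?thesis using e of_nat_n True by (cases "u = 0") auto
  next
    case False
    hence "\<alpha> ^ u \<noteq> \<alpha> ^ 0" unfolding alpha_pow_eq by (auto simp: dvd_eq_mod_eq_0)
    hence ne: "\<alpha> ^ u \<noteq> 1" by simp
    have "(\<alpha> ^ u) ^ n = 1" by (simp flip: power_mult add: mult.commute[of u] power_mult alpha_n)
    hence "(\<Sum>i<n. (\<alpha> ^ u) ^ i) = 0" using ne by (simp add: sum_gp_strict)
    moreover have "u \<noteq> 0" using False by (metis dvd_0_right)
    ultimately show ?thesis using e False by (simp add: zero_power)
  qed
qed

end


context grmctx begin

lemma T_in: "i < n \<Longrightarrow> fst (T i) < r1 \<and> snd (T i) < r2"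
proof -
  assume "i < n"
  hence "T i \<in> {..<r1} \<times> {..<r2}" using Tbij unfolding bij_betw_def by blast
  thus ?thesis by (auto simp: mem_Times_iff)
qed

lemma T_inj: "inj_on T {..<n}" using Tbij by (simp add: bij_betw_def)

lemma dbl_mod: "(x::nat) < r \<Longrightarrow> x = (x + x) mod r \<Longrightarrow> x = 0"
proof (cases "x + x < r")
  case True
  assume "x = (x + x) mod r" thus ?thesis using True by simp
next
  case False
  assume a: "x < r" "x = (x + x) mod r"
  have "(x + x) mod r = x + x - r" using False a(1) by (simp add: le_mod_geq)
  thus ?thesis using a by simp
qed

lemma T_0: "T 0 = (0, 0)"
proof -
  have h: "T 0 = ((fst (T 0) + fst (T 0)) mod r1, (snd (T 0) + snd (T 0)) mod r2)"
    using Thom n_pos by (metis mod_0 add_0)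
  have l: "fst (T 0) < r1" "snd (T 0) < r2" using T_in n_pos by auto
  have "fst (T 0) = 0" using dbl_mod[OF l(1)] h by (metis fst_conv)
  moreover have "snd (T 0) = 0" using dbl_mod[OF l(2)] h by (metis snd_conv)
  ultimately show ?thesis by (simp add: prod_eq_iff)
qed

lemma T_add: "T ((x + y) mod n) =
   ((fst (T (x mod n)) + fst (T (y mod n))) mod r1, (snd (T (x mod n)) + snd (T (y mod n))) mod r2)"
proof -
  have "(x + y) mod n = (x mod n + y mod n) mod n" by (simp add: mod_add_eq)
  thus ?thesis using Thom n_pos by simp
qed

lemma T_mul: "T ((k * e) mod n) = ((k * fst (T (e mod n))) mod r1, (k * snd (T (e mod n))) mod r2)"
proof (induction k)
  case 0 then show ?case using T_0 by simp
next
  case (Suc k)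
  have "T ((Suc k * e) mod n) = T ((k * e + e) mod n)" by (simp add: add.commute)
  also have "\<dots> = ((fst (T ((k * e) mod n)) + fst (T (e mod n))) mod r1,
                    (snd (T ((k * e) mod n)) + snd (T (e mod n))) mod r2)"
    by (subst T_add) simp
  also have "\<dots> = ((Suc k * fst (T (e mod n))) mod r1, (Suc k * snd (T (e mod n))) mod r2)"
    unfolding Suc.IH by (simp add: mod_add_left_eq mod_add_right_eq add.commute)
  finally show ?case .
qed

definition e1 where "e1 = inv_into {..<n} T (1, 0)"
definition e2 where "e2 = inv_into {..<n} T (0, 1)"

lemma e1: "e1 < n" "T e1 = (1, 0)"
proof -
  have h: "(1, 0) \<in> T ` {..<n}" using Tbij r1g r2g by (auto simp: bij_betw_def)
  show "e1 < n" unfolding e1_def using inv_into_into[OF h] by simp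
  show "T e1 = (1, 0)" unfolding e1_def using f_inv_into_f[OF h] by simp
qed

lemma e2: "e2 < n" "T e2 = (0, 1)"
proof -
  have h: "(0, 1) \<in> T ` {..<n}" using Tbij r1g r2g by (auto simp: bij_betw_def)
  show "e2 < n" unfolding e2_def using inv_into_into[OF h] by simp
  show "T e2 = (0, 1)" unfolding e2_def using f_inv_into_f[OF h] by simp
qed

definition \<beta> :: 'e where "\<beta> = \<alpha> ^ e1"
definition \<gamma> :: 'e where "\<gamma> = \<alpha> ^ e2"

lemma T_mod_inj: "T (x mod n) = T (y mod n) \<longleftrightarrow> x mod n = y mod n"
proof
  assume "T (x mod n) = T (y mod n)"
  moreover have "x mod n \<in> {..<n}" "y mod n \<in> {..<n}" using n_pos by auto
  ultimately show "x mod n = y mod n" using inj_onD[OF T_inj] by blast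
qed simp

lemma beta_pow_eq: "\<beta> ^ k = \<beta> ^ l \<longleftrightarrow> k mod r1 = l mod r1"
proof -
  have "\<beta> ^ k = \<beta> ^ l \<longleftrightarrow> (k * e1) mod n = (l * e1) mod n"
    by (simp add: \<beta>_def alpha_pow_eq flip: power_mult add: mult.commute)
  also have "\<dots> \<longleftrightarrow> T ((k * e1) mod n) = T ((l * e1) mod n)"
    using T_mod_inj by simp
  also have "\<dots> \<longleftrightarrow> k mod r1 = l mod r1"
    unfolding T_mul using e1 by simp
  finally show ?thesis .
qed

lemma gamma_pow_eq: "\<gamma> ^ k = \<gamma> ^ l \<longleftrightarrow> k mod r2 = l mod r2"
proof -
  have "\<gamma> ^ k = \<gamma> ^ l \<longleftrightarrow> (k * e2) mod n = (l * e2) mod n"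
    by (simp add: \<gamma>_def alpha_pow_eq flip: power_mult add: mult.commute)
  also have "\<dots> \<longleftrightarrow> T ((k * e2) mod n) = T ((l * e2) mod n)"
    using T_mod_inj by simp
  also have "\<dots> \<longleftrightarrow> k mod r2 = l mod r2"
    unfolding T_mul using e2 by simp
  finally show ?thesis .
qed

lemma point_exists:
  assumes "i1 < r1" "i2 < r2"
  shows "\<exists>i<n. T i = (i1, i2) \<and> \<alpha> ^ i = \<beta> ^ i1 * \<gamma> ^ i2"
proof -
  define x where "x = i1 * e1 + i2 * e2"
  have "T (x mod n) = (i1, i2)"
    unfolding x_def T_add T_mul using e1 e2 assms by simp
  moreover have "\<alpha> ^ (x mod n) = \<beta> ^ i1 * \<gamma> ^ i2"
    unfolding x_def \<beta>_def \<gamma>_def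
    by (simp flip: alpha_pow_mod power_mult add: power_add mult.commute)
  ultimately show ?thesis using n_pos by (intro exI[of _ "x mod n"]) auto
qed

lemma crt_eq:
  assumes "s < n" "s' < n" "\<beta> ^ s = \<beta> ^ s'" "\<gamma> ^ s = \<gamma> ^ s'"
  shows "s = s'"
proof -
  have h1: "s mod r1 = s' mod r1" "s mod r2 = s' mod r2"
    using assms(3,4) beta_pow_eq gamma_pow_eq by auto
  have main: "x = y" if "x \<le> y" "y < n" "x mod r1 = y mod r1" "x mod r2 = y mod r2" for x y
  proof -
    have "r1 dvd y - x" using that(1,3) mod_eq_dvd_iff_nat[where m=y and n=x and q=r1] by simp
    moreover have "r2 dvd y - x" using that(1,4) mod_eq_dvd_iff_nat[where m=y and n=x and q=r2] by simp
    ultimately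
    have "r1 * r2 dvd y - x" using cop by (intro divides_mult)
    hence "n dvd y - x" using n_r by simp
    moreover have "y - x < n" using that by simp
    ultimately have "y - x = 0" by (metis dvd_imp_le not_less neq0_conv)
    thus ?thesis using that by simp
  qed
  show ?thesis
  proof (cases "s \<le> s'")
    case True then show ?thesis using main[of s s'] assms h1 by simp
  next
    case False then show ?thesis using main[of s' s] assms h1 by simp
  qed
qed

end


lemma card_le_pairs: "2 * card {(j, k). j \<le> k \<and> k < (N::nat)} = N * (N + 1)"
proof (induction N)
  case 0 then show ?case by simp
next
  case (Suc N)
  have e: "{(j, k). j \<le> k \<and> k < Suc N} = {(j, k). j \<le> k \<and> k < N} \<union> (\<lambda>j. (j, N)) ` {..N}"
    by auto
  have f: "finite {(j, k). j \<le> k \<and> k < (N::nat)}"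
    by (rule finite_subset[of _ "{..N} \<times> {..N}"]) auto
  have d: "{(j, k). j \<le> k \<and> k < N} \<inter> (\<lambda>j. (j, N)) ` {..N} = {}" by auto
  have c: "card ((\<lambda>j. (j, N)) ` {..N}) = Suc N" by (subst card_image) (auto intro: inj_onI)
  show ?case unfolding e using f d c Suc.IH by (simp add: card_Un_disjoint algebra_simps)
qed

lemma card_lt_pairs: "2 * card {(j, k). j < k \<and> k < (N::nat)} = N * (N - 1)"
proof (induction N)
  case 0 then show ?case by simp
next
  case (Suc N)
  have e: "{(j, k). j < k \<and> k < Suc N} = {(j, k). j < k \<and> k < N} \<union> (\<lambda>j. (j, N)) ` {..<N}"
    by auto
  have f: "finite {(j, k). j < k \<and> k < (N::nat)}"
    by (rule finite_subset[of _ "{..N} \<times> {..N}"]) auto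
  have d: "{(j, k). j < k \<and> k < N} \<inter> (\<lambda>j. (j, N)) ` {..<N} = {}" by auto
  have c: "card ((\<lambda>j. (j, N)) ` {..<N}) = N" by (subst card_image) (auto intro: inj_onI)
  have "2 * card {(j, k). j < k \<and> k < Suc N} = N * (N - 1) + 2 * N"
    unfolding e using f d c Suc.IH by (simp add: card_Un_disjoint algebra_simps)
  also have "\<dots> = Suc N * (Suc N - 1)" by (cases N) (auto simp: algebra_simps)
  finally show ?case .
qed

lemma finite_le_pairs: "finite {(j, k). j \<le> k \<and> k < (N::nat)}"
  by (rule finite_subset[of _ "{..N} \<times> {..N}"]) auto

lemma finite_lt_pairs: "finite {(j, k). j < k \<and> k < (N::nat)}"
  by (rule finite_subset[of _ "{..N} \<times> {..N}"]) auto

context grmctx begin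

definition Lin where "Lin = (\<lambda>j. q ^ j) ` {..<m}"
definition Quad where "Quad = (\<lambda>(j, k). q ^ j + q ^ k) ` {(j, k). j \<le> k \<and> k < m}"
definition Diag where "Diag = (\<lambda>(j, k). q ^ j + q ^ k) ` {(j, k). j \<le> k \<and> k < m \<and> j mod a = k mod a}"
definition Pair where "Pair = (\<lambda>(j, k). q ^ j + q ^ k) ` {(j, k). j \<le> k \<and> k < m \<and> j mod a \<noteq> k mod a}"
definition W where "W = insert 0 (Lin \<union> Quad)"

lemma Quad_split: "Quad = Diag \<union> Pair"
  unfolding Quad_def Diag_def Pair_def by auto

lemma finite_W: "finite W"
  unfolding W_def Lin_def Quad_def using finite_le_pairs by auto

lemma big_P: "q ^ (m - 1) \<ge> 3" "q ^ m = q * q ^ (m - 1)"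
proof -
  have "q ^ (m - 1) \<ge> q ^ 1" using m_ge q_ge by (intro power_increasing) auto
  thus "q ^ (m - 1) \<ge> 3" using q_ge by simp
  show "q ^ m = q * q ^ (m - 1)" using m_ge by (cases m) auto
qed

lemma pow_le_P: "j < m \<Longrightarrow> q ^ j \<le> q ^ (m - 1)"
  using q_ge by (intro power_increasing) auto

lemma pow2_lt_n: "j < m \<Longrightarrow> k < m \<Longrightarrow> q ^ j + q ^ k < n"
proof -
  assume "j < m" "k < m"
  hence "q ^ j \<le> q ^ (m - 1)" "q ^ k \<le> q ^ (m - 1)" using pow_le_P by auto
  hence "q ^ j + q ^ k \<le> 2 * q ^ (m - 1)" by linarith
  moreover have "3 * q ^ (m - 1) \<le> q ^ m" using big_P q_ge by simp
  ultimately show ?thesis using big_P n_def by linarith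
qed

lemma pow_lt_n: "j < m \<Longrightarrow> q ^ j < n"
  using pow2_lt_n[of j j] by simp

lemma W_lt: "t \<in> W \<Longrightarrow> t < n"
  unfolding W_def Lin_def Quad_def using n_pos pow_lt_n pow2_lt_n by auto

lemma LQ_pos: "t \<in> Lin \<union> Quad \<Longrightarrow> t > 0"
  unfolding Lin_def Quad_def using q_ge by auto

lemma zero_notin: "0 \<notin> Lin \<union> Quad" using LQ_pos by blast

lemma W_wt: "t \<in> W \<Longrightarrow> wt q t \<le> 2"
  unfolding W_def Lin_def Quad_def using q_ge wtr_pow wtr_pow2[OF q2]
  by (auto simp: wt_eq_wtr)

lemma W_complete: "t \<le> n \<Longrightarrow> wt q t \<le> 2 \<Longrightarrow> t \<in> W"
proof -
  assume "t \<le> n" "wt q t \<le> 2"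
  hence "t < q ^ m" "wtr q t \<le> 2" using n_Q q_ge by (auto simp: wt_eq_wtr)
  from wtr_class2[OF q2 this] show "t \<in> W"
    unfolding W_def Lin_def Quad_def by auto
qed

lemma Lin_Quad_disj: "Lin \<inter> Quad = {}"
  unfolding Lin_def Quad_def using pow_ne_pow_sum[OF q2] by auto

lemma card_Lin: "card Lin = m"
  unfolding Lin_def using q_ge by (subst card_image) (auto intro: inj_onI)

lemma card_Quad: "card Quad = card {(j, k). j \<le> k \<and> k < m}"
  unfolding Quad_def
proof (rule card_image, rule inj_onI, clarsimp)
  fix j k j' k' assume "j \<le> k" "k < m" "j' \<le> k'" "k' < m" "q ^ j + q ^ k = q ^ j' + q ^ k'"
  from pow_sum_unique[OF q2 this(1,3,5)] show "j = j' \<and> k = k'" .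
qed

lemma card_W: "2 * card W = 2 + 2 * m + m * (m + 1)"
proof -
  have "finite Lin" "finite Quad" using finite_W unfolding W_def by auto
  hence "card W = 1 + card Lin + card Quad"
    unfolding W_def using zero_notin Lin_Quad_disj by (simp add: card_Un_disjoint)
  thus ?thesis using card_Lin card_Quad card_le_pairs[of m] by simp
qed

definition sigma :: "nat \<Rightarrow> nat" where "sigma t = (t * q) mod n"

lemma n_mod: "q ^ m mod n = 1"
  using n_Q n_ge by (metis mod_add_self1 mod_less add.commute one_less_numeral_iff
      semiring_norm(76) less_le_trans numeral_le_iff order.refl Suc_1 less_Suc_eq_le
      numeral_One one_le_numeral)

lemma sigma_W: "t \<in> W - {0} \<Longrightarrow> sigma t \<in> W - {0}"
proof -
  assume t: "t \<in> W - {0}"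
  hence "t \<in> Lin \<or> t \<in> Quad" unfolding W_def by auto
  thus ?thesis
  proof
    assume "t \<in> Lin"
    then obtain j where j: "j < m" "t = q ^ j" unfolding Lin_def by auto
    show ?thesis
    proof (cases "Suc j < m")
      case True
      have "sigma t = q ^ Suc j" unfolding sigma_def j using pow_lt_n[OF True]
        by (simp add: mult.commute)
      thus ?thesis unfolding W_def Lin_def using True q_ge by (auto intro!: image_eqI[of _ _ "Suc j"])
    next
      case False
      hence "Suc j = m" using j by simp
      hence "t * q = q ^ m" using j by (metis power_Suc mult.commute)
      hence "sigma t = 1" unfolding sigma_def using n_mod by simp
      thus ?thesis unfolding W_def Lin_def using m_ge by (auto intro!: image_eqI[of _ _ 0])
    qed
  next
    assume "t \<in> Quad"
    then obtain j k where jk: "j \<le> k" "k < m" "t = q ^ j + q ^ k" unfolding Quad_def by auto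
    have tq: "t * q = q ^ Suc j + q ^ Suc k" unfolding jk by (simp add: algebra_simps)
    show ?thesis
    proof (cases "Suc k < m")
      case True
      have "sigma t = q ^ Suc j + q ^ Suc k" unfolding sigma_def tq
        using pow2_lt_n[of "Suc j" "Suc k"] True jk by simp
      thus ?thesis unfolding W_def Quad_def using True jk q_ge
        by (auto intro!: image_eqI[of _ _ "(Suc j, Suc k)"])
    next
      case False
      hence k: "Suc k = m" using jk by simp
      show ?thesis
      proof (cases "Suc j < m")
        case True
        have "(q ^ Suc j + q ^ Suc k) mod n = (q ^ Suc j + 1) mod n"
          using k n_mod by (metis mod_add_right_eq)
        also have "\<dots> = q ^ 0 + q ^ Suc j" using pow2_lt_n[of 0 "Suc j"] True m_ge by simp
        finally have "sigma t = q ^ 0 + q ^ Suc j" unfolding sigma_def tq .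
        thus ?thesis unfolding W_def Quad_def using True q_ge
          by (auto intro!: image_eqI[of _ _ "(0, Suc j)"])
      next
        case False
        hence j: "Suc j = m" using jk by simp
        have "(q ^ Suc j + q ^ Suc k) mod n = (1 + 1) mod n"
          using k j n_mod by (metis mod_add_eq)
        also have "\<dots> = q ^ 0 + q ^ 0" using n_ge by simp
        finally have "sigma t = q ^ 0 + q ^ 0" unfolding sigma_def tq .
        thus ?thesis unfolding W_def Quad_def using q_ge m_ge
          by (auto intro!: image_eqI[of _ _ "(0, 0)"])
      qed
    qed
  qed
qed

lemma coprime_qn: "coprime q n"
proof (rule coprimeI)
  fix d assume "d dvd q" "d dvd n"
  moreover have "q dvd q ^ m" using m1 by (cases m) auto
  ultimately have "d dvd q ^ m" by (meson dvd_trans)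
  hence "d dvd n + 1" using n_Q by simp
  from dvd_add_right_iff[of d n 1] \<open>d dvd n\<close> this show "is_unit d" by simp
qed

lemma sigma_inj: "inj_on sigma (W - {0})"
proof -
  have main: "x = y" if "x \<le> y" "y < n" "(x * q) mod n = (y * q) mod n" for x y
  proof -
    have "n dvd y * q - x * q" using that mod_eq_dvd_iff_nat[where m="y*q" and n="x*q" and q=n] by simp
    hence "n dvd (y - x) * q" by (simp add: diff_mult_distrib)
    hence "n dvd y - x" using coprime_qn by (simp add: coprime_dvd_mult_left_iff coprime_commute)
    moreover have "y - x < n" using that by simp
    ultimately have "y - x = 0" by (metis dvd_imp_le not_less neq0_conv)
    thus ?thesis using that by simp
  qed
  show ?thesis
  proof (rule inj_onI)
    fix x y assume "x \<in> W - {0}" "y \<in> W - {0}" "sigma x = sigma y"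
    hence "x < n" "y < n" "(x * q) mod n = (y * q) mod n" using W_lt by (auto simp: sigma_def)
    thus "x = y" using main[of x y] main[of y x] by (cases "x \<le> y") auto
  qed
qed

lemma sigma_bij: "bij_betw sigma (W - {0}) (W - {0})"
proof -
  have sub: "sigma ` (W - {0}) \<subseteq> W - {0}" unfolding image_subset_iff using sigma_W by (intro ballI) assumption
  have "sigma ` (W - {0}) = W - {0}"
    by (rule endo_inj_surj[OF _ sub sigma_inj]) (use finite_W in simp)
  thus ?thesis unfolding bij_betw_def using sigma_inj by simp
qed

lemma pow_sigma: "t \<in> W - {0} \<Longrightarrow> (x::'e) ^ (t * q) = x ^ sigma t"
proof (cases "x = 0")
  case True
  assume t: "t \<in> W - {0}"
  hence "sigma t \<noteq> 0" using sigma_W by auto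
  moreover have "t * q \<noteq> 0" using t q_ge by auto
  ultimately show ?thesis using True by (simp add: power_0_left)
next
  case False
  show ?thesis unfolding sigma_def by (rule pow_mod_n[OF False])
qed

end


lemma vdm:
  fixes w g :: "'b \<Rightarrow> 'a::field"
  assumes fin: "finite S" and inj: "inj_on w S" and card: "card S \<le> N"
    and van: "\<forall>i<N. (\<Sum>s\<in>S. g s * w s ^ i) = 0" and s0: "s0 \<in> S"
  shows "g s0 = 0"
proof -
  define P where "P = (\<Prod>s\<in>S - {s0}. [:- w s, 1:])"
  have degP: "degree P = card (S - {s0})"
    unfolding P_def by (subst degree_prod_sum_eq) auto
  have cS: "card (S - {s0}) < N" using card s0 fin
    by (metis card_Diff1_less le_less_trans not_le)
  have polyP: "poly P z = (\<Sum>i<N. coeff P i * z ^ i)" for z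
  proof -
    have "poly P z = (\<Sum>i\<le>degree P. coeff P i * z ^ i)" by (rule poly_altdef)
    also have "\<dots> = (\<Sum>i<N. coeff P i * z ^ i)"
    proof (rule sum.mono_neutral_left)
      show "\<forall>i\<in>{..<N} - {..degree P}. coeff P i * z ^ i = 0"
        by (auto simp: coeff_eq_0)
    qed (use degP cS in auto)
    finally show ?thesis .
  qed
  have "0 = (\<Sum>i<N. coeff P i * (\<Sum>s\<in>S. g s * w s ^ i))" using van by simp
  also have "\<dots> = (\<Sum>s\<in>S. g s * (\<Sum>i<N. coeff P i * w s ^ i))"
    by (simp add: sum_distrib_left sum_distrib_right algebra_simps sum.swap[of _ "{..<N}"])
  also have "\<dots> = (\<Sum>s\<in>S. g s * poly P (w s))" by (simp add: polyP)
  also have "\<dots> = (\<Sum>s\<in>{s0}. g s * poly P (w s))"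
  proof (rule sum.mono_neutral_right)
    show "finite S" by fact
    show "{s0} \<subseteq> S" using s0 by simp
    show "\<forall>i\<in>S - {s0}. g i * poly P (w i) = 0"
    proof
      fix s assume s: "s \<in> S - {s0}"
      have "poly P (w s) = (\<Prod>s'\<in>S - {s0}. w s - w s')" unfolding P_def by (simp add: poly_prod)
      also have "\<dots> = 0" using s fin by (intro prod_zero) auto
      finally show "g s * poly P (w s) = 0" by simp
    qed
  qed
  finally have e: "g s0 * poly P (w s0) = 0" by simp
  have "poly P (w s0) = (\<Prod>s'\<in>S - {s0}. w s0 - w s')" unfolding P_def by (simp add: poly_prod)
  moreover have "(\<Prod>s'\<in>S - {s0}. w s0 - w s') \<noteq> 0"
    using inj s0 fin by (auto simp: prod_zero_iff dest: inj_onD)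
  ultimately show ?thesis using e by simp
qed

lemma vdm_group:
  fixes lab :: "'b \<Rightarrow> 'a::field"
  assumes fin: "finite S" and card: "card (lab ` S) \<le> N"
    and van: "\<forall>i<N. (\<Sum>s\<in>S. g s * lab s ^ i) = 0" and y: "y \<in> lab ` S"
  shows "(\<Sum>s\<in>{s\<in>S. lab s = y}. g s) = 0"
proof -
  define G where "G y = (\<Sum>s\<in>{s\<in>S. lab s = y}. g s)" for y
  have "\<forall>i<N. (\<Sum>y\<in>lab ` S. G y * id y ^ i) = 0"
  proof (intro allI impI)
    fix i assume "i < N"
    have "(\<Sum>s\<in>S. g s * lab s ^ i) = (\<Sum>y\<in>lab ` S. \<Sum>s\<in>{s\<in>S. lab s = y}. g s * lab s ^ i)"
      by (rule sum.image_gen[OF fin])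
    also have "\<dots> = (\<Sum>y\<in>lab ` S. G y * id y ^ i)"
      unfolding G_def by (intro sum.cong refl) (auto simp: sum_distrib_right)
    finally show "(\<Sum>y\<in>lab ` S. G y * id y ^ i) = 0" using van \<open>i < N\<close> by simp
  qed
  from vdm[OF _ _ card this y] fin show ?thesis unfolding G_def by simp
qed

lemma tri_bound: "a * (a + 3) + 2 \<le> 2 * 3 ^ a"
proof (induction a)
  case 0 then show ?case by simp
next
  case (Suc a)
  have "3 ^ a \<ge> a + 1"
    by (induction a) auto
  thus ?case using Suc.IH by (simp add: algebra_simps)
qed

lemma sq_bound: "b ^ 2 \<le> (\<Sum>l<b. (3::nat) ^ l)"
proof (induction b)
  case 0 then show ?case by simp
next
  case (Suc b)
  have "3 ^ b \<ge> 2 * b + 1"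
    by (induction b) auto
  thus ?case using Suc.IH by (simp add: power2_eq_square algebra_simps)
qed

lemma geom_nat: "(x::nat) \<ge> 1 \<Longrightarrow> (x - 1) * (\<Sum>l<b. x ^ l) = x ^ b - 1"
proof (induction b)
  case 0 then show ?case by simp
next
  case (Suc b)
  have "(x - 1) * (\<Sum>l<Suc b. x ^ l) = (x ^ b - 1) + (x - 1) * x ^ b"
    using Suc by (simp add: algebra_simps)
  also have "\<dots> = x ^ Suc b - 1"
  proof -
    have h1: "x ^ b \<ge> 1" using Suc.prems by simp
    have h2: "x * x ^ b \<ge> x ^ b" using Suc.prems by simp
    have "(x - 1) * x ^ b = x * x ^ b - x ^ b" by (simp add: diff_mult_distrib)
    hence "x ^ b - 1 + (x - 1) * x ^ b = x * x ^ b - 1" using h1 h2 by linarith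
    thus ?thesis by simp
  qed
  finally show ?case .
qed

context grmctx begin

definition PF :: "(nat \<Rightarrow> 'e) \<Rightarrow> 'e \<Rightarrow> 'e" where "PF f x = (\<Sum>t\<in>W. f t * x ^ t)"
definition I1 :: "'e set" where "I1 = insert 0 {\<alpha> ^ i | i. i < n \<and> T i \<in> \<Gamma>}"

lemma r1_bound: "a * (a + 3) div 2 \<le> r1"
proof -
  have "a * (a + 3) + 2 \<le> 2 * 3 ^ a" by (rule tri_bound)
  also have "3 ^ a \<le> q ^ a" using q_ge by (intro power_mono) auto
  finally have "a * (a + 3) + 2 \<le> 2 * q ^ a" by simp
  thus ?thesis using r1_def by linarith
qed

lemma r2_bound: "b ^ 2 \<le> r2"
proof -
  have "r1 * (\<Sum>l<b. (q ^ a) ^ l) = (q ^ a) ^ b - 1"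
    unfolding r1_def using q_ge by (intro geom_nat) simp
  also have "\<dots> = r1 * r2" using n_def n_r m_def by (simp add: power_mult)
  finally have "r2 = (\<Sum>l<b. (q ^ a) ^ l)" using r1g by simp
  moreover have "(\<Sum>l<b. (3::nat) ^ l) \<le> (\<Sum>l<b. (q ^ a) ^ l)"
  proof (rule sum_mono)
    fix l
    have "3 \<le> q ^ a" using q_ge a_ge
      by (metis le_trans power_increasing power_one_right one_le_numeral order.trans
           less_imp_le_nat q2 Suc_leI numeral_3_eq_3 dual_order.trans)
    thus "3 ^ l \<le> (q ^ a) ^ l" by (intro power_mono) auto
  qed
  ultimately show ?thesis using sq_bound[of b] by simp
qed

end


context grmctx begin

lemma qa_mod: "q ^ a mod r1 = 1"
proof -
  have "q ^ a = r1 + 1" using r1_def q_ge by simp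
  moreover have "(r1 + 1) mod r1 = 1 mod r1" by (metis mod_add_self1 add.commute)
  ultimately show ?thesis using r1g by simp
qed

lemma qpow_mod: "q ^ j mod r1 = q ^ (j mod a) mod r1"
proof -
  have "q ^ j = (q ^ a) ^ (j div a) * q ^ (j mod a)"
    by (simp flip: power_mult power_add)
  hence "q ^ j mod r1 = (((q ^ a) ^ (j div a)) mod r1 * q ^ (j mod a)) mod r1"
    by (simp add: mod_mult_left_eq)
  also have "((q ^ a) ^ (j div a)) mod r1 = 1"
    using qa_mod r1g by (metis power_mod power_one mod_less)
  finally show ?thesis by simp
qed

lemma beta_lin: "\<beta> ^ (q ^ j) = \<beta> ^ (q ^ (j mod a))"
  using qpow_mod beta_pow_eq by simp

lemma beta_quad: "\<beta> ^ (q ^ j + q ^ k) = \<beta> ^ (q ^ (j mod a) + q ^ (k mod a))"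
  unfolding beta_pow_eq by (metis mod_add_eq qpow_mod)

lemma lab_lt: "u < a \<Longrightarrow> q ^ u < r1 \<and> q ^ u \<ge> 1"
  and lab2_le: "u < a \<Longrightarrow> v < a \<Longrightarrow> q ^ u + q ^ v \<le> r1"
proof -
  define R where "R = q ^ (a - 1)"
  have R1: "R \<ge> 1" using q_ge by (simp add: R_def)
  have qa: "q ^ a = q * R" using a_ge unfolding R_def by (cases a) auto
  hence "q ^ a \<ge> 3 * R" using q_ge by simp
  hence r1R: "r1 + 1 \<ge> 3 * R" using r1_def q_ge by simp
  have le: "u < a \<Longrightarrow> q ^ u \<le> R" for u unfolding R_def using q_ge by (intro power_increasing) auto
  show "u < a \<Longrightarrow> q ^ u < r1 \<and> q ^ u \<ge> 1" using le[of u] R1 r1R q_ge by simp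
  show "u < a \<Longrightarrow> v < a \<Longrightarrow> q ^ u + q ^ v \<le> r1" using le[of u] le[of v] R1 r1R by linarith
qed

lemma beta_lab_eq: "1 \<le> X \<Longrightarrow> X \<le> r1 \<Longrightarrow> 1 \<le> Y \<Longrightarrow> Y \<le> r1 \<Longrightarrow> \<beta> ^ X = \<beta> ^ Y \<Longrightarrow> X = Y"
proof -
  assume h: "1 \<le> X" "X \<le> r1" "1 \<le> Y" "Y \<le> r1" "\<beta> ^ X = \<beta> ^ Y"
  hence e: "X mod r1 = Y mod r1" using beta_pow_eq by simp
  consider "X < r1" "Y < r1" | "X = r1" | "Y = r1" using h by linarith
  thus "X = Y"
  proof cases
    case 1 then show ?thesis using e by simp
  next
    case 2 then have "Y mod r1 = 0" using e by simp
    thus ?thesis using 2 h by (metis le_neq_implies_less mod_less not_one_le_zero)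
  next
    case 3 then have "X mod r1 = 0" using e by simp
    thus ?thesis using 3 h by (metis le_neq_implies_less mod_less not_one_le_zero)
  qed
qed

lemma PF_0: "PF f 0 = f 0"
proof -
  have "PF f 0 = f 0 * 0 ^ 0 + (\<Sum>t\<in>W - {0}. f t * 0 ^ t)"
    unfolding PF_def using finite_W by (subst sum.remove[of _ 0]) (auto simp: W_def)
  also have "(\<Sum>t\<in>W - {0}. f t * (0::'e) ^ t) = 0" by (intro sum.neutral) auto
  finally show ?thesis by simp
qed

lemma point_in: "(i1, i2) \<in> \<Gamma> \<Longrightarrow> i1 < r1 \<Longrightarrow> i2 < r2 \<Longrightarrow> \<beta> ^ i1 * \<gamma> ^ i2 \<in> I1"
proof -
  assume h: "(i1, i2) \<in> \<Gamma>" "i1 < r1" "i2 < r2"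
  from point_exists[OF h(2,3)] obtain i where i: "i < n" "T i = (i1, i2)" "\<alpha> ^ i = \<beta> ^ i1 * \<gamma> ^ i2"
    by auto
  have "\<exists>i. \<beta> ^ i1 * \<gamma> ^ i2 = \<alpha> ^ i \<and> i < n \<and> T i \<in> \<Gamma>"
    by (rule exI[of _ i]) (use i h(1) in simp)
  thus ?thesis unfolding I1_def by blast
qed

lemma step:
  assumes S: "S \<subseteq> W - {0}"
    and vanish: "\<forall>t\<in>W - S. f t = 0"
    and pts: "\<forall>i1<N1. \<forall>i2<N2. PF f (\<beta> ^ i1 * \<gamma> ^ i2) = 0"
    and labc: "card ((\<lambda>t. \<beta> ^ t) ` S) \<le> N1"
    and t0: "t0 \<in> S"
    and fib: "card {t\<in>S. \<beta> ^ t = \<beta> ^ t0} \<le> N2"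
  shows "f t0 = 0"
proof -
  have finS: "finite S" using S finite_W finite_subset by blast
  have grp: "(\<Sum>t\<in>{t\<in>S. \<beta> ^ t = \<beta> ^ t0}. f t * (\<gamma> ^ t) ^ i2) = 0" if i2: "i2 < N2" for i2
  proof -
    have "\<forall>i1<N1. (\<Sum>t\<in>S. (f t * (\<gamma> ^ t) ^ i2) * (\<beta> ^ t) ^ i1) = 0"
    proof (intro allI impI)
      fix i1 assume "i1 < N1"
      have "PF f (\<beta> ^ i1 * \<gamma> ^ i2) = (\<Sum>t\<in>S. f t * (\<beta> ^ i1 * \<gamma> ^ i2) ^ t)"
        unfolding PF_def
      proof (rule sum.mono_neutral_right)
        show "finite W" by (rule finite_W)
        show "S \<subseteq> W" using S by blast
        show "\<forall>i\<in>W - S. f i * (\<beta> ^ i1 * \<gamma> ^ i2) ^ i = 0" using vanish by simp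
      qed
      also have "\<dots> = (\<Sum>t\<in>S. (f t * (\<gamma> ^ t) ^ i2) * (\<beta> ^ t) ^ i1)"
        by (intro sum.cong refl) (simp add: power_mult_distrib algebra_simps flip: power_mult)
      finally show "(\<Sum>t\<in>S. (f t * (\<gamma> ^ t) ^ i2) * (\<beta> ^ t) ^ i1) = 0"
        using pts \<open>i1 < N1\<close> i2 by simp
    qed
    from vdm_group[OF finS labc this, of "\<beta> ^ t0"] t0 show ?thesis by simp
  qed
  define F0 where "F0 = {t\<in>S. \<beta> ^ t = \<beta> ^ t0}"
  have finF: "finite F0" using finS by (simp add: F0_def)
  have inj: "inj_on (\<lambda>t. \<gamma> ^ t) F0"
  proof (rule inj_onI)
    fix x y assume "x \<in> F0" "y \<in> F0" "\<gamma> ^ x = \<gamma> ^ y"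
    moreover have "x < n" "y < n" using \<open>x \<in> F0\<close> \<open>y \<in> F0\<close> S W_lt by (auto simp: F0_def)
    ultimately show "x = y" using crt_eq by (auto simp: F0_def)
  qed
  have "\<forall>i<N2. (\<Sum>t\<in>F0. f t * (\<gamma> ^ t) ^ i) = 0" using grp by (simp add: F0_def)
  from vdm[OF finF inj _ this] fib t0 show ?thesis by (simp add: F0_def)
qed

end


context grmctx begin

lemma jdec: "j mod a + a * (j div a) = j" by (rule mod_mult_div_eq)

lemma jmod: "j mod a < a" using a_ge by simp

lemma jdiv: "j < m \<Longrightarrow> j div a < b"
  using m_def by (intro less_mult_imp_div_less) (simp add: mult.commute)

lemma lab1_b: "u < a \<Longrightarrow> 1 \<le> q ^ u \<and> q ^ u \<le> r1" using lab_lt by fastforce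

lemma lab2_b: "u < a \<Longrightarrow> v < a \<Longrightarrow> 1 \<le> q ^ u + q ^ v \<and> q ^ u + q ^ v \<le> r1"
  using lab2_le lab_lt by fastforce

lemma sum_pair_eq:
  assumes "u < a" "v < a" "u' < a" "v' < a" "u \<le> v"
    and "\<beta> ^ (q ^ u' + q ^ v') = \<beta> ^ (q ^ u + q ^ v)"
  shows "(u' = u \<and> v' = v) \<or> (u' = v \<and> v' = u)"
proof -
  have e: "q ^ u' + q ^ v' = q ^ u + q ^ v"
    using beta_lab_eq lab2_b assms by blast
  show ?thesis
  proof (cases "u' \<le> v'")
    case True
    from pow_sum_unique[OF q2 True assms(5) e] show ?thesis by simp
  next
    case False
    have "q ^ v' + q ^ u' = q ^ u + q ^ v" using e by simp
    from pow_sum_unique[OF q2 _ assms(5) this] False show ?thesis by simp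
  qed
qed

lemma fib_lin:
  assumes j: "j < m"
  shows "{t\<in>W - {0}. \<beta> ^ t = \<beta> ^ (q ^ j)} \<subseteq> (\<lambda>x. q ^ (j mod a + a * x)) ` {..<b}"
proof
  fix t assume t: "t \<in> {t\<in>W - {0}. \<beta> ^ t = \<beta> ^ (q ^ j)}"
  hence tW: "t \<in> Lin \<or> t \<in> Quad" and tb: "\<beta> ^ t = \<beta> ^ (q ^ (j mod a))"
    using beta_lin[of j] by (auto simp: W_def)
  from tW show "t \<in> (\<lambda>x. q ^ (j mod a + a * x)) ` {..<b}"
  proof
    assume "t \<in> Lin"
    then obtain j' where j': "j' < m" "t = q ^ j'" unfolding Lin_def by auto
    have "\<beta> ^ (q ^ (j' mod a)) = \<beta> ^ (q ^ (j mod a))" using tb j' beta_lin by simp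
    hence "q ^ (j' mod a) = q ^ (j mod a)"
      using beta_lab_eq lab1_b jmod by blast
    hence "j' mod a = j mod a" using q_ge by simp
    hence "t = q ^ (j mod a + a * (j' div a))" using j' jdec[of j'] by simp
    thus ?thesis using jdiv[OF j'(1)] by auto
  next
    assume "t \<in> Quad"
    then obtain j' k' where jk: "j' \<le> k'" "k' < m" "t = q ^ j' + q ^ k'" unfolding Quad_def by auto
    have "\<beta> ^ (q ^ (j' mod a) + q ^ (k' mod a)) = \<beta> ^ (q ^ (j mod a))"
      using tb jk beta_quad by simp
    hence "q ^ (j' mod a) + q ^ (k' mod a) = q ^ (j mod a)"
      using beta_lab_eq lab1_b lab2_b jmod by blast
    thus ?thesis using pow_ne_pow_sum[OF q2] by metis
  qed
qed

lemma fib_diag: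
  assumes jk: "j \<le> k" "k < m" "j mod a = k mod a"
  shows "{t\<in>Quad. \<beta> ^ t = \<beta> ^ (q ^ j + q ^ k)} \<subseteq>
     (\<lambda>(x, y). q ^ (j mod a + a * x) + q ^ (j mod a + a * y)) ` {(x, y). x \<le> y \<and> y < b}"
proof
  fix t assume t: "t \<in> {t\<in>Quad. \<beta> ^ t = \<beta> ^ (q ^ j + q ^ k)}"
  then obtain j' k' where jk': "j' \<le> k'" "k' < m" "t = q ^ j' + q ^ k'" unfolding Quad_def by auto
  have "\<beta> ^ (q ^ (j' mod a) + q ^ (k' mod a)) = \<beta> ^ (q ^ (j mod a) + q ^ (j mod a))"
    using t jk' beta_quad[of j' k'] beta_quad[of j k] jk by simp
  from sum_pair_eq[OF jmod jmod jmod jmod order.refl this]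
  have e: "j' mod a = j mod a" "k' mod a = j mod a" by auto
  have "t = q ^ (j mod a + a * (j' div a)) + q ^ (j mod a + a * (k' div a))"
    using jk' e jdec[of j'] jdec[of k'] by simp
  moreover have "j' div a \<le> k' div a" "k' div a < b" using jk' jdiv by (auto intro: div_le_mono)
  ultimately show "t \<in> (\<lambda>(x, y). q ^ (j mod a + a * x) + q ^ (j mod a + a * y)) ` {(x, y). x \<le> y \<and> y < b}"
    by (intro image_eqI[of _ _ "(j' div a, k' div a)"]) auto
qed

lemma fib_pair:
  assumes jk: "j \<le> k" "k < m" "j mod a \<noteq> k mod a"
  defines "u \<equiv> min (j mod a) (k mod a)" and "v \<equiv> max (j mod a) (k mod a)"
  shows "{t\<in>Pair. \<beta> ^ t = \<beta> ^ (q ^ j + q ^ k)} \<subseteq>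
     (\<lambda>(x, y). q ^ (u + a * x) + q ^ (v + a * y)) ` ({..<b} \<times> {..<b})"
proof
  fix t assume t: "t \<in> {t\<in>Pair. \<beta> ^ t = \<beta> ^ (q ^ j + q ^ k)}"
  then obtain j' k' where jk': "j' \<le> k'" "k' < m" "j' mod a \<noteq> k' mod a" "t = q ^ j' + q ^ k'"
    unfolding Pair_def by auto
  have uv: "u < a" "v < a" "u \<le> v" using jmod unfolding u_def v_def by (auto simp: min_def max_def)
  have "q ^ (j mod a) + q ^ (k mod a) = q ^ u + q ^ v" unfolding u_def v_def
    by (cases "j mod a \<le> k mod a") (auto simp: min_def max_def)
  hence "\<beta> ^ (q ^ (j' mod a) + q ^ (k' mod a)) = \<beta> ^ (q ^ u + q ^ v)"
    using t jk' beta_quad[of j' k'] beta_quad[of j k] by simp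
  from sum_pair_eq[OF uv(1) uv(2) jmod jmod uv(3) this]
  have "(j' mod a = u \<and> k' mod a = v) \<or> (j' mod a = v \<and> k' mod a = u)" .
  thus "t \<in> (\<lambda>(x, y). q ^ (u + a * x) + q ^ (v + a * y)) ` ({..<b} \<times> {..<b})"
  proof
    assume e: "j' mod a = u \<and> k' mod a = v"
    have "t = q ^ (u + a * (j' div a)) + q ^ (v + a * (k' div a))"
      using jk' e jdec[of j'] jdec[of k'] by simp
    moreover have "j' div a < b" "k' div a < b" using jk' jdiv by auto
    ultimately show ?thesis by (intro image_eqI[of _ _ "(j' div a, k' div a)"]) auto
  next
    assume e: "j' mod a = v \<and> k' mod a = u"
    have "t = q ^ (u + a * (k' div a)) + q ^ (v + a * (j' div a))"
      using jk' e jdec[of j'] jdec[of k'] by simp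
    moreover have "j' div a < b" "k' div a < b" using jk' jdiv by auto
    ultimately show ?thesis by (intro image_eqI[of _ _ "(k' div a, j' div a)"]) auto
  qed
qed

end


lemma card_le_pairs': "card {(j, k). j \<le> k \<and> k < (N::nat)} = N * (N + 1) div 2"
  using card_le_pairs[of N] by simp

lemma card_lt_pairs': "card {(j, k). j < k \<and> k < (N::nat)} = N * (N - 1) div 2"
  using card_lt_pairs[of N] by simp

context grmctx begin

lemma quad_lab: "\<beta> ^ (q ^ j + q ^ k) \<in> (\<lambda>(u, v). \<beta> ^ (q ^ u + q ^ v)) ` {(u, v). u \<le> v \<and> v < a}"
proof (cases "j mod a \<le> k mod a")
  case True
  thus ?thesis using beta_quad[of j k] jmod
    by (intro image_eqI[of _ _ "(j mod a, k mod a)"]) auto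
next
  case False
  thus ?thesis using beta_quad[of j k] jmod
    by (intro image_eqI[of _ _ "(k mod a, j mod a)"]) (auto simp: add.commute)
qed

lemma pair_lab: "j mod a \<noteq> k mod a \<Longrightarrow>
   \<beta> ^ (q ^ j + q ^ k) \<in> (\<lambda>(u, v). \<beta> ^ (q ^ u + q ^ v)) ` {(u, v). u < v \<and> v < a}"
proof (cases "j mod a < k mod a")
  case True
  thus ?thesis using beta_quad[of j k] jmod
    by (intro image_eqI[of _ _ "(j mod a, k mod a)"]) auto
next
  case False
  assume "j mod a \<noteq> k mod a"
  with False show ?thesis using beta_quad[of j k] jmod
    by (intro image_eqI[of _ _ "(k mod a, j mod a)"]) (auto simp: add.commute)
qed

lemma tri_eq: "a * (a + 3) div 2 = a * (a + 1) div 2 + a"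
proof -
  have "a * (a + 3) = a * (a + 1) + a * 2" by (simp add: algebra_simps)
  thus ?thesis by simp
qed

lemma labc1: "card ((\<lambda>t. \<beta> ^ t) ` (W - {0})) \<le> a * (a + 3) div 2"
proof -
  define A1 where "A1 = (\<lambda>u. \<beta> ^ (q ^ u)) ` {..<a}"
  define A2 where "A2 = (\<lambda>(u, v). \<beta> ^ (q ^ u + q ^ v)) ` {(u, v). u \<le> v \<and> v < a}"
  have sub: "(\<lambda>t. \<beta> ^ t) ` (W - {0}) \<subseteq> A1 \<union> A2"
  proof
    fix y assume "y \<in> (\<lambda>t. \<beta> ^ t) ` (W - {0})"
    then obtain t where t: "t \<in> Lin \<or> t \<in> Quad" "y = \<beta> ^ t" by (auto simp: W_def)
    from t(1) show "y \<in> A1 \<union> A2"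
    proof
      assume "t \<in> Lin"
      then obtain j where "t = q ^ j" unfolding Lin_def by auto
      thus ?thesis using t(2) beta_lin[of j] jmod unfolding A1_def by auto
    next
      assume "t \<in> Quad"
      then obtain j k where "t = q ^ j + q ^ k" unfolding Quad_def by auto
      thus ?thesis using t(2) quad_lab[of j k] unfolding A2_def by auto
    qed
  qed
  have fin: "finite A1" "finite A2" unfolding A1_def A2_def using finite_le_pairs by auto
  have "card ((\<lambda>t. \<beta> ^ t) ` (W - {0})) \<le> card (A1 \<union> A2)" by (rule card_mono[OF _ sub]) (use fin in simp)
  also have "\<dots> \<le> card A1 + card A2" by (rule card_Un_le)
  also have "card A1 \<le> a" unfolding A1_def using card_image_le[of "{..<a}"] by simp
  also have "card A2 \<le> card {(u, v). u \<le> v \<and> v < a}" unfolding A2_def by (rule card_image_le[OF finite_le_pairs])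
  also have "\<dots> = a * (a + 1) div 2" by (rule card_le_pairs')
  finally show ?thesis using tri_eq by simp
qed

lemma labc2: "card ((\<lambda>t. \<beta> ^ t) ` Quad) \<le> a * (a + 1) div 2"
proof -
  define A2 where "A2 = (\<lambda>(u, v). \<beta> ^ (q ^ u + q ^ v)) ` {(u, v). u \<le> v \<and> v < a}"
  have sub: "(\<lambda>t. \<beta> ^ t) ` Quad \<subseteq> A2"
    unfolding Quad_def A2_def using quad_lab by auto
  have "card ((\<lambda>t. \<beta> ^ t) ` Quad) \<le> card A2"
    by (rule card_mono[OF _ sub]) (simp add: A2_def finite_le_pairs)
  also have "card A2 \<le> card {(u, v). u \<le> v \<and> v < a}" unfolding A2_def by (rule card_image_le[OF finite_le_pairs])
  also have "\<dots> = a * (a + 1) div 2" by (rule card_le_pairs')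
  finally show ?thesis .
qed

lemma labc3: "card ((\<lambda>t. \<beta> ^ t) ` Pair) \<le> a * (a - 1) div 2"
proof -
  define A3 where "A3 = (\<lambda>(u, v). \<beta> ^ (q ^ u + q ^ v)) ` {(u, v). u < v \<and> v < a}"
  have sub: "(\<lambda>t. \<beta> ^ t) ` Pair \<subseteq> A3"
    unfolding Pair_def A3_def using pair_lab by auto
  have "card ((\<lambda>t. \<beta> ^ t) ` Pair) \<le> card A3"
    by (rule card_mono[OF _ sub]) (simp add: A3_def finite_lt_pairs)
  also have "card A3 \<le> card {(u, v). u < v \<and> v < a}" unfolding A3_def by (rule card_image_le[OF finite_lt_pairs])
  also have "\<dots> = a * (a - 1) div 2" by (rule card_lt_pairs')
  finally show ?thesis .
qed

lemma bfacts: "b \<le> b * (b + 1) div 2" "b * (b + 1) div 2 \<le> b ^ 2"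
proof -
  have "2 * b \<le> b * (b + 1)" using b_ge by simp
  thus "b \<le> b * (b + 1) div 2" by linarith
  have "b * (b + 1) \<le> 2 * b ^ 2" using b_ge by (simp add: power2_eq_square algebra_simps)
  thus "b * (b + 1) div 2 \<le> b ^ 2" by linarith
qed

lemma afacts: "a * (a - 1) div 2 \<le> a * (a + 1) div 2" "a * (a + 1) div 2 \<le> a * (a + 3) div 2"
  by (intro div_le_mono mult_le_mono2; simp)+

lemma gam_a: "i1 < a * (a + 3) div 2 \<Longrightarrow> i2 < b \<Longrightarrow> (i1, i2) \<in> \<Gamma>"
  unfolding Gam using bfacts afacts tri_eq by auto

lemma gam_b: "i1 < a * (a + 1) div 2 \<Longrightarrow> i2 < b * (b + 1) div 2 \<Longrightarrow> (i1, i2) \<in> \<Gamma>"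
  unfolding Gam using bfacts afacts by auto

lemma gam_c: "i1 < a * (a - 1) div 2 \<Longrightarrow> i2 < b ^ 2 \<Longrightarrow> (i1, i2) \<in> \<Gamma>"
  unfolding Gam by auto

lemma pts:
  assumes van: "\<forall>x\<in>I1. PF f x = 0" and "(i1, i2) \<in> \<Gamma>" "i1 < a * (a + 3) div 2" "i2 < b ^ 2"
  shows "PF f (\<beta> ^ i1 * \<gamma> ^ i2) = 0"
proof -
  have "i1 < r1" "i2 < r2" using assms r1_bound r2_bound by linarith+
  hence "\<beta> ^ i1 * \<gamma> ^ i2 \<in> I1" using assms(2) by (intro point_in)
  thus ?thesis using van by (rule bspec[rotated])
qed

lemma core_inj:
  assumes van: "\<forall>x\<in>I1. PF f x = 0"
  shows "\<forall>t\<in>W. f t = 0"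
proof -
  have f0: "f 0 = 0" using van PF_0 by (simp add: I1_def)
  have lin: "f t = 0" if t: "t \<in> Lin" for t
  proof -
    obtain j where j: "j < m" "t = q ^ j" using t unfolding Lin_def by auto
    show ?thesis
    proof (rule step[of "W - {0}" f "a * (a + 3) div 2" b])
      show "\<forall>t\<in>W - (W - {0}). f t = 0" using f0 by auto
      show "\<forall>i1<a * (a + 3) div 2. \<forall>i2<b. PF f (\<beta> ^ i1 * \<gamma> ^ i2) = 0"
      proof (intro allI impI)
        fix i1 i2 assume h: "i1 < a * (a + 3) div 2" "i2 < b"
        show "PF f (\<beta> ^ i1 * \<gamma> ^ i2) = 0"
          by (rule pts[OF van gam_a[OF h]]) (use h afacts bfacts in linarith)+
      qed
      show "card ((\<lambda>t. \<beta> ^ t) ` (W - {0})) \<le> a * (a + 3) div 2" by (rule labc1)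
      show "t \<in> W - {0}" using t zero_notin by (auto simp: W_def)
      have "card {s \<in> W - {0}. \<beta> ^ s = \<beta> ^ t} \<le> card ((\<lambda>x. q ^ (j mod a + a * x)) ` {..<b})"
        by (rule card_mono) (simp, use fib_lin[OF j(1)] j(2) in simp)
      also have "\<dots> \<le> b" using card_image_le[of "{..<b}"] by simp
      finally show "card {s \<in> W - {0}. \<beta> ^ s = \<beta> ^ t} \<le> b" .
    qed simp
  qed
  have diag: "f t = 0" if t: "t \<in> Diag" for t
  proof -
    obtain j k where jk: "j \<le> k" "k < m" "j mod a = k mod a" "t = q ^ j + q ^ k"
      using t unfolding Diag_def by auto
    show ?thesis
    proof (rule step[of Quad f "a * (a + 1) div 2" "b * (b + 1) div 2"])
      show "Quad \<subseteq> W - {0}" using zero_notin by (auto simp: W_def)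
      show "\<forall>t\<in>W - Quad. f t = 0" using f0 lin by (auto simp: W_def)
      show "\<forall>i1<a * (a + 1) div 2. \<forall>i2<b * (b + 1) div 2. PF f (\<beta> ^ i1 * \<gamma> ^ i2) = 0"
      proof (intro allI impI)
        fix i1 i2 assume h: "i1 < a * (a + 1) div 2" "i2 < b * (b + 1) div 2"
        show "PF f (\<beta> ^ i1 * \<gamma> ^ i2) = 0"
          by (rule pts[OF van gam_b[OF h]]) (use h afacts bfacts in linarith)+
      qed
      show "card ((\<lambda>t. \<beta> ^ t) ` Quad) \<le> a * (a + 1) div 2" by (rule labc2)
      show "t \<in> Quad" using t Quad_split by auto
      have "card {s \<in> Quad. \<beta> ^ s = \<beta> ^ t} \<le>
          card ((\<lambda>(x, y). q ^ (j mod a + a * x) + q ^ (j mod a + a * y)) ` {(x, y). x \<le> y \<and> y < b})"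
        by (rule card_mono) (simp add: finite_le_pairs, use fib_diag[OF jk(1-3)] jk(4) in simp)
      also have "\<dots> \<le> card {(x, y). x \<le> y \<and> y < b}" by (rule card_image_le[OF finite_le_pairs])
      also have "\<dots> = b * (b + 1) div 2" by (rule card_le_pairs')
      finally show "card {s \<in> Quad. \<beta> ^ s = \<beta> ^ t} \<le> b * (b + 1) div 2" .
    qed
  qed
  have pair: "f t = 0" if t: "t \<in> Pair" for t
  proof -
    obtain j k where jk: "j \<le> k" "k < m" "j mod a \<noteq> k mod a" "t = q ^ j + q ^ k"
      using t unfolding Pair_def by auto
    show ?thesis
    proof (rule step[of Pair f "a * (a - 1) div 2" "b ^ 2"])
      show "Pair \<subseteq> W - {0}" using zero_notin Quad_split by (auto simp: W_def)
      show "\<forall>t\<in>W - Pair. f t = 0" using f0 lin diag Quad_split by (auto simp: W_def)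
      show "\<forall>i1<a * (a - 1) div 2. \<forall>i2<b ^ 2. PF f (\<beta> ^ i1 * \<gamma> ^ i2) = 0"
      proof (intro allI impI)
        fix i1 i2 assume h: "i1 < a * (a - 1) div 2" "i2 < b ^ 2"
        show "PF f (\<beta> ^ i1 * \<gamma> ^ i2) = 0"
          by (rule pts[OF van gam_c[OF h]]) (use h afacts bfacts in linarith)+
      qed
      show "card ((\<lambda>t. \<beta> ^ t) ` Pair) \<le> a * (a - 1) div 2" by (rule labc3)
      show "t \<in> Pair" using t by auto
      define u where "u = min (j mod a) (k mod a)"
      define v where "v = max (j mod a) (k mod a)"
      have "card {s \<in> Pair. \<beta> ^ s = \<beta> ^ t} \<le>
          card ((\<lambda>(x, y). q ^ (u + a * x) + q ^ (v + a * y)) ` ({..<b} \<times> {..<b}))"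
        by (rule card_mono) (simp, use fib_pair[OF jk(1-3)] jk(4) in \<open>simp add: u_def v_def\<close>)
      also have "\<dots> \<le> card ({..<b} \<times> {..<b})" by (rule card_image_le) simp
      also have "\<dots> = b ^ 2" by (simp add: power2_eq_square)
      finally show "card {s \<in> Pair. \<beta> ^ s = \<beta> ^ t} \<le> b ^ 2" .
    qed
  qed
  show ?thesis using f0 lin diag pair Quad_split by (auto simp: W_def)
qed

end


context grmctx begin

lemma PF_diff: "PF (\<lambda>t. f t - g t) x = PF f x - PF g x"
  unfolding PF_def by (simp add: sum_subtractf algebra_simps)

lemma PF_inj: "\<forall>x\<in>I1. PF f x = PF g x \<Longrightarrow> \<forall>t\<in>W. f t = g t"
proof -
  assume h: "\<forall>x\<in>I1. PF f x = PF g x"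
  have "\<forall>x\<in>I1. PF (\<lambda>t. f t - g t) x = 0" using h by (simp add: PF_diff)
  from core_inj[OF this] show ?thesis by simp
qed

lemma PF_cong: "\<forall>t\<in>W. f t = g t \<Longrightarrow> PF f x = PF g x"
  unfolding PF_def by (intro sum.cong) auto

lemma finite_I1: "finite I1" by simp

lemma even_pred: "even (x * (x - 1 :: nat))"
  by (cases "even x") auto

lemma card_Gam: "card \<Gamma> \<le> a * (a - 1) div 2 * b ^ 2 + a * (b * (b + 1) div 2) + a * b"
proof -
  define A where "A = a * (a - 1) div 2"
  define A' where "A' = a * (a + 1) div 2"
  define A'' where "A'' = a * (a + 3) div 2"
  define B where "B = b * (b + 1) div 2"
  have AA': "A' = A + a"
  proof -
    have "a * (a + 1) = a * (a - 1) + 2 * a" using a_ge by (cases a) (auto simp: algebra_simps)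
    moreover have "even (a * (a - 1))" by (rule even_pred)
    ultimately show ?thesis unfolding A_def A'_def by auto
  qed
  have A'A'': "A'' = A' + a" unfolding A'_def A''_def by (rule tri_eq)
  have e: "\<Gamma> = {..<A} \<times> {..<b ^ 2} \<union> {A..<A'} \<times> {..<B} \<union> {A'..<A''} \<times> {..<b}"
    unfolding Gam A_def A'_def A''_def B_def by auto
  have "card \<Gamma> \<le> card ({..<A} \<times> {..<b ^ 2} \<union> {A..<A'} \<times> {..<B}) + card ({A'..<A''} \<times> {..<b})"
    unfolding e by (rule card_Un_le)
  also have "\<dots> \<le> card ({..<A} \<times> {..<b ^ 2}) + card ({A..<A'} \<times> {..<B}) + card ({A'..<A''} \<times> {..<b})"
    using card_Un_le by (intro add_right_mono) blast
  also have "\<dots> = A * b ^ 2 + a * B + a * b"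
    by (simp add: card_cartesian_product AA' A'A'')
  finally show ?thesis unfolding A_def B_def .
qed

lemma card_I1_W: "card I1 \<le> card W"
proof -
  have "card I1 \<le> Suc (card {\<alpha> ^ i | i. i < n \<and> T i \<in> \<Gamma>})"
    unfolding I1_def by (rule card_insert_le_m1) auto
  also have "{\<alpha> ^ i | i. i < n \<and> T i \<in> \<Gamma>} = (\<lambda>i. \<alpha> ^ i) ` {i. i < n \<and> T i \<in> \<Gamma>}" by auto
  also have "card \<dots> \<le> card {i. i < n \<and> T i \<in> \<Gamma>}" by (rule card_image_le) simp
  also have "card {i. i < n \<and> T i \<in> \<Gamma>} \<le> card \<Gamma>"
  proof (rule card_inj_on_le)
    show "inj_on T {i. i < n \<and> T i \<in> \<Gamma>}" using T_inj by (rule inj_on_subset) auto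
    show "T ` {i. i < n \<and> T i \<in> \<Gamma>} \<subseteq> \<Gamma>" by auto
    show "finite \<Gamma>"
    proof (rule finite_subset)
      show "\<Gamma> \<subseteq> {..<a * (a + 3) div 2} \<times> {..<b ^ 2}"
        unfolding Gam using bfacts afacts by auto
    qed simp
  qed
  finally have c1: "card I1 \<le> Suc (a * (a - 1) div 2 * b ^ 2 + a * (b * (b + 1) div 2) + a * b)"
    using card_Gam by linarith
  have ev1: "2 * (a * (a - 1) div 2) = a * (a - 1)" using even_pred[of a] by simp
  have ev2: "2 * (b * (b + 1) div 2) = b * (b + 1)" by simp
  have "2 * (a * (a - 1) div 2 * b ^ 2 + a * (b * (b + 1) div 2) + a * b)
      = (2 * (a * (a - 1) div 2)) * b ^ 2 + a * (2 * (b * (b + 1) div 2)) + 2 * a * b"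
    by (simp only: algebra_simps)
  also have "\<dots> = a * (a - 1) * b ^ 2 + a * (b * (b + 1)) + 2 * a * b"
    unfolding ev1 ev2 ..
  also have "\<dots> = 2 * m + m * (m + 1)"
    using a_ge unfolding m_def by (cases a) (auto simp: algebra_simps power2_eq_square)
  finally have "2 * (a * (a - 1) div 2 * b ^ 2 + a * (b * (b + 1) div 2) + a * b) = 2 * m + m * (m + 1)" .
  moreover define S where "S = a * (a - 1) div 2 * b ^ 2 + a * (b * (b + 1) div 2) + a * b"
  ultimately have h1: "2 * S = 2 * m + m * (m + 1)" and h2: "card I1 \<le> Suc S" using c1 by simp_all
  define M where "M = m * (m + 1)"
  have h3: "2 * card W = 2 + 2 * m + M" using card_W unfolding M_def .
  have "2 * S = 2 * m + M" using h1 unfolding M_def .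
  thus ?thesis using h2 h3 by linarith
qed

lemma PF_surj: "\<exists>f. \<forall>x\<in>I1. PF f x = v x"
proof -
  define R where "R f = restrict (PF f) I1" for f
  have inj: "inj_on R (W \<rightarrow>\<^sub>E UNIV)"
  proof (rule inj_onI)
    fix f g assume f: "f \<in> W \<rightarrow>\<^sub>E UNIV" and g: "g \<in> W \<rightarrow>\<^sub>E UNIV" and "R f = R g"
    hence "\<forall>x\<in>I1. PF f x = PF g x" unfolding R_def by (metis restrict_apply')
    from PF_inj[OF this] have "\<forall>t\<in>W. f t = g t" .
    thus "f = g" using f g by (auto simp: fun_eq_iff PiE_def extensional_def)
  qed
  have sub: "R ` (W \<rightarrow>\<^sub>E UNIV) \<subseteq> I1 \<rightarrow>\<^sub>E UNIV" unfolding R_def by auto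
  have cW: "card (W \<rightarrow>\<^sub>E (UNIV :: 'e set)) = card (UNIV :: 'e set) ^ card W"
    using finite_W by (simp add: card_PiE)
  have cI: "card (I1 \<rightarrow>\<^sub>E (UNIV :: 'e set)) = card (UNIV :: 'e set) ^ card I1"
    by (simp add: card_PiE)
  have "card (I1 \<rightarrow>\<^sub>E (UNIV :: 'e set)) \<le> card (R ` (W \<rightarrow>\<^sub>E UNIV))"
    unfolding card_image[OF inj] cW cI using card_I1_W cardF q_ge
    by (intro power_increasing) auto
  hence eq: "R ` (W \<rightarrow>\<^sub>E UNIV) = I1 \<rightarrow>\<^sub>E UNIV"
    by (intro card_seteq[OF _ sub]) (simp add: finite_PiE)
  have "restrict v I1 \<in> I1 \<rightarrow>\<^sub>E UNIV" by simp
  then obtain f where "R f = restrict v I1" unfolding eq[symmetric] by auto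
  hence "\<forall>x\<in>I1. PF f x = v x" unfolding R_def by (metis restrict_apply')
  thus ?thesis by blast
qed

end


context grmctx begin

lemma PF_split: "PF f y = f 0 + (\<Sum>t\<in>W - {0}. f t * y ^ t)"
  unfolding PF_def using finite_W by (subst sum.remove[of _ 0]) (auto simp: W_def)

lemma PF_frob: "(PF f y) ^ q = PF (\<lambda>t. if t = 0 then f 0 ^ q else f (inv_into (W - {0}) sigma t) ^ q) y"
proof -
  define g where "g t = (if t = 0 then f 0 ^ q else f (inv_into (W - {0}) sigma t) ^ q)" for t
  have "(PF f y) ^ q = f 0 ^ q + (\<Sum>t\<in>W - {0}. (f t * y ^ t) ^ q)"
    unfolding PF_split by (simp add: frob_add frob_sum)
  also have "(\<Sum>t\<in>W - {0}. (f t * y ^ t) ^ q) = (\<Sum>t\<in>W - {0}. f t ^ q * y ^ sigma t)"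
    by (intro sum.cong refl) (simp add: power_mult_distrib pow_sigma flip: power_mult)
  also have "\<dots> = (\<Sum>t\<in>W - {0}. (\<lambda>s. g s * y ^ s) (sigma t))"
  proof (intro sum.cong refl)
    fix t assume t: "t \<in> W - {0}"
    have "sigma t \<noteq> 0" using sigma_W[OF t] by auto
    moreover have "inv_into (W - {0}) sigma (sigma t) = t" using sigma_inj t by (simp add: inv_into_f_f)
    ultimately show "f t ^ q * y ^ sigma t = (\<lambda>s. g s * y ^ s) (sigma t)" by (simp add: g_def)
  qed
  also have "\<dots> = (\<Sum>s\<in>W - {0}. g s * y ^ s)" by (rule sum.reindex_bij_betw[OF sigma_bij])
  finally show ?thesis unfolding PF_split[of g] g_def[symmetric] by (simp add: g_def)
qed

lemma PF_K:
  assumes "\<forall>x\<in>I1. PF f x \<in> K"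
  shows "PF f y \<in> K"
proof -
  define g where "g t = (if t = 0 then f 0 ^ q else f (inv_into (W - {0}) sigma t) ^ q)" for t
  have fr: "(PF f z) ^ q = PF g z" for z unfolding g_def by (rule PF_frob)
  have "\<forall>x\<in>I1. PF g x = PF f x" using assms fr by (simp add: K_iff)
  from PF_inj[OF this] have "PF g y = PF f y" by (intro PF_cong) simp
  thus ?thesis using fr by (simp add: K_iff)
qed

lemma wt_compl: "t \<le> n \<Longrightarrow> wt q (n - t) + wt q t = m * (q - 1)"
proof -
  assume "t \<le> n"
  hence tq: "t < q ^ m" using n_Q by simp
  have "n - t = q ^ m - 1 - t" using n_def by simp
  thus ?thesis using wtr_compl[OF q_ge(2) tq] by (simp add: wt_eq_wtr[OF q_ge(2)])
qed

lemma W_pair_ok: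
  assumes t: "t \<in> W" and s: "s < n" and sw: "wt q s < m * (q - 1) - 2"
  shows "\<not> (0 < t + s \<and> n dvd t + s)"
proof
  assume h: "0 < t + s \<and> n dvd t + s"
  then obtain k where k: "t + s = n * k" by blast
  have "t < n" using W_lt t by simp
  hence "n * k < n * 2" using s k by linarith
  hence "k < 2" by simp
  moreover have "k \<noteq> 0" using h k by auto
  ultimately have "t + s = n" using k by (cases k) auto
  hence "s = n - t" by simp
  hence "wt q s + wt q t = m * (q - 1)" using wt_compl \<open>t < n\<close> by simp
  moreover have "wt q t \<le> 2" using W_wt t by simp
  ultimately show False using sw by linarith
qed

lemma PF_parity2:
  assumes s: "s < n" and sw: "wt q s < m * (q - 1) - 2"
  shows "(\<Sum>x\<in>UNIV. PF f x * x ^ s) = 0"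
proof -
  have "(\<Sum>x\<in>UNIV. PF f x * x ^ s) = (\<Sum>x\<in>UNIV. \<Sum>t\<in>W. f t * x ^ (t + s))"
    unfolding PF_def by (simp add: sum_distrib_right power_add mult.assoc)
  also have "\<dots> = (\<Sum>t\<in>W. f t * (\<Sum>x\<in>UNIV. x ^ (t + s)))"
    by (subst sum.swap) (simp add: sum_distrib_left)
  also have "\<dots> = 0"
  proof (intro sum.neutral ballI)
    fix t assume "t \<in> W"
    hence "\<not> (0 < t + s \<and> n dvd t + s)" by (rule W_pair_ok[OF _ s sw])
    thus "f t * (\<Sum>x\<in>UNIV. x ^ (t + s)) = 0" by (subst power_sum_UNIV, subst if_not_P) simp_all
  qed
  finally show ?thesis .
qed

lemma H_val:
  "(\<Sum>t\<in>{1..n}. (x::'e) ^ (n - t) * y ^ t) =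
     (if y = 0 then 0 else if x = 0 then 1 else if x = y then -1 else 0)"
proof (cases "y = 0")
  case True then show ?thesis by (intro trans[OF sum.neutral]) auto
next
  case y: False
  show ?thesis
  proof (cases "x = 0")
    case True
    have "(\<Sum>t\<in>{1..n}. (x::'e) ^ (n - t) * y ^ t) = x ^ (n - n) * y ^ n + (\<Sum>t\<in>{1..n} - {n}. x ^ (n - t) * y ^ t)"
      using n_pos by (subst sum.remove[of _ n]) auto
    also have "(\<Sum>t\<in>{1..n} - {n}. x ^ (n - t) * y ^ t) = 0"
      using True by (intro sum.neutral) auto
    finally show ?thesis using True y pow_n[OF y] by simp
  next
    case x: False
    define z where "z = y / x"
    have zt: "x ^ (n - t) * y ^ t = z ^ t" if "t \<le> n" for t
    proof -
      have "x ^ (n - t) * x ^ t = 1" using that pow_n[OF x] by (simp flip: power_add)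
      hence "x ^ (n - t) = inverse (x ^ t)" using x by (simp add: field_simps)
      thus ?thesis unfolding z_def by (simp add: field_simps power_divide)
    qed
    have "(\<Sum>t\<in>{1..n}. x ^ (n - t) * y ^ t) = (\<Sum>t\<in>{1..n}. z ^ t)"
      by (intro sum.cong refl) (simp add: zt)
    also have "\<dots> = (\<Sum>i<n. z ^ Suc i)"
      using sum.atLeast1_atMost_eq[of "\<lambda>t. z ^ t" n] by simp
    also have "\<dots> = z * (\<Sum>i<n. z ^ i)" by (simp add: sum_distrib_left)
    finally have e: "(\<Sum>t\<in>{1..n}. x ^ (n - t) * y ^ t) = z * (\<Sum>i<n. z ^ i)" .
    have zn: "z ^ n = 1" unfolding z_def using pow_n[OF x] pow_n[OF y] by (simp add: power_divide)
    show ?thesis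
    proof (cases "x = y")
      case True
      hence "z = 1" using x by (simp add: z_def)
      thus ?thesis using e True x y of_nat_n by simp
    next
      case False
      hence "z \<noteq> 1" using x by (simp add: z_def)
      hence "(\<Sum>i<n. z ^ i) = 0" using zn by (simp add: sum_gp_strict)
      thus ?thesis using e False x y by simp
    qed
  qed
qed

definition fc :: "('e \<Rightarrow> 'e) \<Rightarrow> nat \<Rightarrow> 'e" where
  "fc c t = (if t = 0 then c 0 else - (\<Sum>x\<in>UNIV. c x * x ^ (n - t)))"

lemma fourier: "c y = (\<Sum>t\<le>n. fc c t * y ^ t)"
proof -
  have A: "{..n} = insert 0 {1..n}" by auto
  have "(\<Sum>t\<le>n. fc c t * y ^ t) = c 0 + (\<Sum>t\<in>{1..n}. fc c t * y ^ t)"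
    unfolding A by (subst sum.insert) (auto simp: fc_def)
  also have "(\<Sum>t\<in>{1..n}. fc c t * y ^ t) = (\<Sum>t\<in>{1..n}. - (\<Sum>x\<in>UNIV. c x * (x ^ (n - t) * y ^ t)))"
    by (intro sum.cong refl) (auto simp: fc_def sum_distrib_right mult.assoc)
  also have "\<dots> = - (\<Sum>t\<in>{1..n}. \<Sum>x\<in>UNIV. c x * (x ^ (n - t) * y ^ t))" by (simp add: sum_negf)
  also have "(\<Sum>t\<in>{1..n}. \<Sum>x\<in>UNIV. c x * (x ^ (n - t) * y ^ t)) = (\<Sum>x\<in>UNIV. \<Sum>t\<in>{1..n}. c x * (x ^ (n - t) * y ^ t))"
    by (rule sum.swap)
  also have "\<dots> = (\<Sum>x\<in>UNIV. c x * (\<Sum>t\<in>{1..n}. x ^ (n - t) * y ^ t))" by (simp add: sum_distrib_left)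
  also have "(\<Sum>x\<in>UNIV. c x * (\<Sum>t\<in>{1..n}. x ^ (n - t) * y ^ t)) =
       (\<Sum>x\<in>UNIV. c x * (if y = 0 then 0 else if x = 0 then 1 else if x = y then -1 else 0))"
    by (simp only: H_val)
  also have "\<dots> = (if y = 0 then 0 else c 0 - c y)"
  proof (cases "y = 0")
    case False
    have "(\<Sum>x\<in>UNIV. c x * (if x = 0 then 1 else if x = y then -1 else 0)) =
          (\<Sum>x\<in>{0, y}. c x * (if x = 0 then 1 else if x = y then -1 else 0))"
      by (rule sum.mono_neutral_right) auto
    also have "\<dots> = c 0 - c y" using False by simp
    finally show ?thesis using False by simp
  qed simp
  finally show ?thesis by (cases "y = 0") auto
qed

lemma fc_zero:
  assumes par: "\<forall>s. s < n \<and> wt q s < m * (q - 1) - 2 \<longrightarrow> (\<Sum>x\<in>UNIV. c x * x ^ s) = 0"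
    and t: "t \<le> n" "t \<notin> W"
  shows "fc c t = 0"
proof -
  have t0: "t \<noteq> 0" using t by (auto simp: W_def)
  have "\<not> wt q t \<le> 2" using W_complete t by blast
  hence "wt q (n - t) < m * (q - 1) - 2" using wt_compl[OF t(1)] by linarith
  moreover have "n - t < n" using t0 t by simp
  ultimately show ?thesis using par t0 by (simp add: fc_def)
qed

lemma C2_PF:
  assumes par: "\<forall>s. s < n \<and> wt q s < m * (q - 1) - 2 \<longrightarrow> (\<Sum>x\<in>UNIV. c x * x ^ s) = 0"
  shows "c y = PF (fc c) y"
proof -
  have "c y = (\<Sum>t\<le>n. fc c t * y ^ t)" by (rule fourier)
  also have "\<dots> = PF (fc c) y" unfolding PF_def
  proof (rule sum.mono_neutral_right)
    show "W \<subseteq> {..n}" using W_lt by fastforce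
    show "\<forall>t\<in>{..n} - W. fc c t * y ^ t = 0" using fc_zero[OF par] by auto
  qed simp
  finally show ?thesis .
qed

end


lemma info_setI:
  fixes F :: "'a set" and C :: "('c \<Rightarrow> 'a) set"
  assumes fin: "finite I" and q: "card F \<ge> 2"
    and bij: "bij_betw (\<lambda>c. restrict c I) C (I \<rightarrow>\<^sub>E F)"
  shows "info_set F C I"
proof -
  have finF: "finite F" using q by (metis card.infinite not_numeral_le_zero)
  have "card C = card (I \<rightarrow>\<^sub>E F)" using bij by (rule bij_betw_same_card)
  also have "\<dots> = card F ^ card I" using fin by (simp add: card_PiE)
  finally have cC: "card C = card F ^ card I" .
  have "code_dim F C = card I"
    unfolding code_dim_def
  proof (rule the_equality)
    show "card C = card F ^ card I" by fact
    fix k assume "card C = card F ^ k"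
    hence "card F ^ k = card F ^ card I" using cC by simp
    thus "k = card I" using q by simp
  qed
  thus ?thesis unfolding info_set_def using fin bij by (simp add: bij_betw_def)
qed

context grmctx begin

lemma card_K: "card K = q"
proof -
  define R where "R = (\<Sum>l<m. q ^ l)"
  have nR: "n = (q - 1) * R" unfolding R_def n_def using q_ge by (intro geom_nat[symmetric]) simp
  have Rpos: "R > 0" using nR n_pos by (cases R) auto
  have q1: "q - 1 > 0" using q_ge by simp
  have Keq: "K = insert 0 ((\<lambda>j. \<alpha> ^ (R * j)) ` {..<q - 1})"
  proof (intro equalityI subsetI)
    fix x assume x: "x \<in> K"
    show "x \<in> insert 0 ((\<lambda>j. \<alpha> ^ (R * j)) ` {..<q - 1})"
    proof (cases "x = 0")
      case False
      then obtain i where i: "i < n" "x = \<alpha> ^ i" using nonzero_alpha by auto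
      have "\<alpha> ^ (i * q) = \<alpha> ^ i" using x i by (simp add: K_iff power_mult)
      hence "(i * q) mod n = i mod n" by (simp add: alpha_pow_eq)
      hence "n dvd i * q - i" using q_ge by (subst mod_eq_dvd_iff_nat[symmetric]) auto
      hence "(q - 1) * R dvd (q - 1) * i" using nR by (simp add: diff_mult_distrib2 mult.commute)
      hence "R dvd i" using q1 by simp
      then obtain j where j: "i = R * j" by blast
      have "R * j < R * (q - 1)" using i j nR by (simp add: mult.commute)
      hence "j < q - 1" by simp
      thus ?thesis using i j by auto
    qed simp
  next
    fix x assume "x \<in> insert 0 ((\<lambda>j. \<alpha> ^ (R * j)) ` {..<q - 1})"
    then consider "x = 0" | j where "x = \<alpha> ^ (R * j)" by auto
    thus "x \<in> K"
    proof cases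
      case 1 then show ?thesis using K_0 by simp
    next
      case 2
      have "R * j * q = R * j + n * j" using nR q_ge
        by (simp add: algebra_simps)
      hence "(R * j * q) mod n = (R * j) mod n" by simp
      hence "\<alpha> ^ (R * j * q) = \<alpha> ^ (R * j)" by (simp add: alpha_pow_eq)
      thus ?thesis using 2 by (simp add: K_iff power_mult)
    qed
  qed
  have inj: "inj_on (\<lambda>j. \<alpha> ^ (R * j)) {..<q - 1}"
  proof (rule inj_onI)
    fix j j' assume "j \<in> {..<q - 1}" "j' \<in> {..<q - 1}" "\<alpha> ^ (R * j) = \<alpha> ^ (R * j')"
    moreover have "R * j < n" "R * j' < n" using calculation nR Rpos by (auto simp: mult.commute)
    ultimately have "R * j = R * j'" using alpha_pow_eq by simp
    thus "j = j'" using Rpos by simp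
  qed
  have "0 \<notin> (\<lambda>j. \<alpha> ^ (R * j)) ` {..<q - 1}" using alpha_nz by auto
  hence "card K = Suc (card ((\<lambda>j. \<alpha> ^ (R * j)) ` {..<q - 1}))" unfolding Keq by simp
  also have "\<dots> = q" using card_image[OF inj] q_ge by simp
  finally show ?thesis .
qed

end


context grmctx begin

lemma K_ge2: "card K \<ge> 2" using card_K q_ge by simp

lemma GRM2_iff: "c \<in> GRM q 2 m \<longleftrightarrow> (\<forall>x. c x \<in> K) \<and>
   (\<forall>s. s < n \<and> wt q s < m * (q - 1) - 2 \<longrightarrow> (\<Sum>x\<in>UNIV. c x * x ^ s) = 0)"
  unfolding GRM_def K_def n_def by simp

lemma m3: "m * (q - 1) \<ge> 3"
proof -
  have "m * (q - 1) \<ge> 2 * 2" using m_ge q_ge by (intro mult_mono) auto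
  thus ?thesis by simp
qed

lemma GRM3_iff: "c \<in> GRM q (m * (q - 1) - 3) m \<longleftrightarrow> (\<forall>x. c x \<in> K) \<and>
   (\<forall>s. s < n \<and> wt q s < 3 \<longrightarrow> (\<Sum>x\<in>UNIV. c x * x ^ s) = 0)"
proof -
  have "m * (q - 1) - (m * (q - 1) - 3) = 3" using m3 by simp
  thus ?thesis unfolding GRM_def K_def n_def by simp
qed

theorem part1: "info_set K (GRM q 2 m :: ('e \<Rightarrow> 'e) set) I1"
proof (rule info_setI[OF finite_I1 K_ge2])
  let ?C = "GRM q 2 m :: ('e \<Rightarrow> 'e) set"
  show "bij_betw (\<lambda>c. restrict c I1) ?C (I1 \<rightarrow>\<^sub>E K)"
    unfolding bij_betw_def
  proof (intro conjI)
    show "inj_on (\<lambda>c. restrict c I1) ?C"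
    proof (rule inj_onI)
      fix c c' assume c: "c \<in> ?C" and c': "c' \<in> ?C" and e: "restrict c I1 = restrict c' I1"
      have pc: "\<And>y. c y = PF (fc c) y" using c unfolding GRM2_iff by (intro C2_PF) blast
      have pc': "\<And>y. c' y = PF (fc c') y" using c' unfolding GRM2_iff by (intro C2_PF) blast
      have "\<forall>x\<in>I1. c x = c' x" using e by (metis restrict_apply')
      hence "\<forall>x\<in>I1. PF (fc c) x = PF (fc c') x" using pc pc' by simp
      from PF_inj[OF this] have "\<And>y. PF (fc c) y = PF (fc c') y" by (intro PF_cong) simp
      thus "c = c'" using pc pc' by (simp add: fun_eq_iff)
    qed
    show "(\<lambda>c. restrict c I1) ` ?C = I1 \<rightarrow>\<^sub>E K"
    proof (intro equalityI subsetI)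
      fix v assume "v \<in> (\<lambda>c. restrict c I1) ` ?C"
      then obtain c where "c \<in> ?C" "v = restrict c I1" by blast
      thus "v \<in> I1 \<rightarrow>\<^sub>E K" unfolding GRM2_iff by auto
    next
      fix v assume v: "v \<in> I1 \<rightarrow>\<^sub>E K"
      obtain f where f: "\<forall>x\<in>I1. PF f x = v x" using PF_surj by blast
      have "PF f \<in> ?C" unfolding GRM2_iff
      proof (intro conjI allI impI)
        fix x show "PF f x \<in> K" using f v by (intro PF_K) auto
      next
        fix s assume "s < n \<and> wt q s < m * (q - 1) - 2"
        thus "(\<Sum>x\<in>UNIV. PF f x * x ^ s) = 0" by (intro PF_parity2) auto
      qed
      moreover have "restrict (PF f) I1 = v"
        using f v by (auto simp: fun_eq_iff PiE_def extensional_def)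
      ultimately show "v \<in> (\<lambda>c. restrict c I1) ` ?C" by (intro image_eqI[of _ _ "PF f"]) auto
    qed
  qed
qed

definition D :: "'e \<Rightarrow> nat \<Rightarrow> 'e" where
  "D x0 = (SOME f. \<forall>x\<in>I1. PF f x = (if x = x0 then 1 else 0))"

definition dd :: "'e \<Rightarrow> 'e \<Rightarrow> 'e" where "dd x0 y = PF (D x0) y"

lemma dd_I: "x \<in> I1 \<Longrightarrow> dd x0 x = (if x = x0 then 1 else 0)"
proof -
  assume x: "x \<in> I1"
  have "\<exists>f. \<forall>x\<in>I1. PF f x = (if x = x0 then 1 else 0)" by (rule PF_surj)
  hence "\<forall>x\<in>I1. PF (D x0) x = (if x = x0 then 1 else 0)" unfolding D_def by (rule someI_ex)
  thus ?thesis using x by (simp add: dd_def)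
qed

lemma dd_K: "dd x0 y \<in> K"
  unfolding dd_def by (rule PF_K) (use dd_I K_0 K_1 in \<open>auto simp: dd_def\<close>)

lemma lincomb: "PF f y = (\<Sum>x0\<in>I1. PF f x0 * dd x0 y)"
proof -
  define g where "g t = (\<Sum>x0\<in>I1. PF f x0 * D x0 t)" for t
  have pg: "PF g z = (\<Sum>x0\<in>I1. PF f x0 * dd x0 z)" for z
  proof -
    have "PF g z = (\<Sum>t\<in>W. \<Sum>x0\<in>I1. PF f x0 * D x0 t * z ^ t)"
      unfolding PF_def g_def by (simp add: sum_distrib_right)
    also have "\<dots> = (\<Sum>x0\<in>I1. \<Sum>t\<in>W. PF f x0 * D x0 t * z ^ t)" by (rule sum.swap)
    also have "\<dots> = (\<Sum>x0\<in>I1. PF f x0 * dd x0 z)"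
      unfolding dd_def PF_def[of "D _"] by (simp add: sum_distrib_left mult.assoc)
    finally show ?thesis .
  qed
  have "\<forall>x\<in>I1. PF g x = PF f x"
  proof
    fix x assume x: "x \<in> I1"
    have "PF g x = (\<Sum>x0\<in>I1. PF f x0 * (if x = x0 then 1 else 0))" unfolding pg using x dd_I by simp
    also have "\<dots> = PF f x" using x by (simp add: if_distrib cong: if_cong)
    finally show "PF g x = PF f x" .
  qed
  from PF_inj[OF this] have "PF g y = PF f y" by (intro PF_cong) simp
  thus ?thesis using pg by simp
qed

lemma orth:
  assumes c: "\<forall>s. s < n \<and> wt q s < 3 \<longrightarrow> (\<Sum>x\<in>UNIV. c x * x ^ s) = 0"
  shows "(\<Sum>x\<in>UNIV. c x * PF f x) = 0"
proof -
  have "(\<Sum>x\<in>UNIV. c x * PF f x) = (\<Sum>x\<in>UNIV. \<Sum>t\<in>W. f t * (c x * x ^ t))"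
    unfolding PF_def by (simp add: sum_distrib_left algebra_simps)
  also have "\<dots> = (\<Sum>t\<in>W. f t * (\<Sum>x\<in>UNIV. c x * x ^ t))"
    by (subst sum.swap) (simp add: sum_distrib_left)
  also have "\<dots> = 0"
  proof (intro sum.neutral ballI)
    fix t assume t: "t \<in> W"
    have "t < n" "wt q t < 3" using W_lt[OF t] W_wt[OF t] by auto
    thus "f t * (\<Sum>x\<in>UNIV. c x * x ^ t) = 0" using c by simp
  qed
  finally show ?thesis .
qed

lemma monomial: "s \<in> W \<Longrightarrow> x ^ s = PF (\<lambda>t. if t = s then 1 else 0) x"
proof -
  assume s: "s \<in> W"
  have "PF (\<lambda>t. if t = s then 1 else 0) x = (\<Sum>t\<in>W. if t = s then x ^ t else 0)"
    unfolding PF_def by (intro sum.cong) auto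
  also have "\<dots> = x ^ s" using s finite_W by simp
  finally show ?thesis by simp
qed

lemma split_UNIV: "(\<Sum>x\<in>UNIV. h x) = (\<Sum>x\<in>I1. h x) + (\<Sum>x\<in>UNIV - I1. (h x :: 'e))"
  using sum.subset_diff[of I1 UNIV h] by (simp add: add.commute)

theorem part2: "info_set K (GRM q (m * (q - 1) - 3) m :: ('e \<Rightarrow> 'e) set) (UNIV - I1)"
proof (rule info_setI[OF _ K_ge2])
  let ?C = "GRM q (m * (q - 1) - 3) m :: ('e \<Rightarrow> 'e) set"
  show "finite (UNIV - I1)" by simp
  show "bij_betw (\<lambda>c. restrict c (UNIV - I1)) ?C ((UNIV - I1) \<rightarrow>\<^sub>E K)"
    unfolding bij_betw_def
  proof (intro conjI)
    show "inj_on (\<lambda>c. restrict c (UNIV - I1)) ?C"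
    proof (rule inj_onI)
      fix c c' assume c: "c \<in> ?C" and c': "c' \<in> ?C"
        and e: "restrict c (UNIV - I1) = restrict c' (UNIV - I1)"
      have out: "\<forall>x\<in>UNIV - I1. c x = c' x" using e by (metis restrict_apply')
      have "c x0 = c' x0" if x0: "x0 \<in> I1" for x0
      proof -
        have o1: "(\<Sum>x\<in>UNIV. c x * dd x0 x) = 0" using c unfolding GRM3_iff dd_def by (intro orth) blast
        have o2: "(\<Sum>x\<in>UNIV. c' x * dd x0 x) = 0" using c' unfolding GRM3_iff dd_def by (intro orth) blast
        have "0 = (\<Sum>x\<in>UNIV. (c x - c' x) * dd x0 x)" using o1 o2 by (simp add: sum_subtractf algebra_simps)
        also have "\<dots> = (\<Sum>x\<in>I1. (c x - c' x) * dd x0 x)"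
          using out by (subst split_UNIV) simp
        also have "\<dots> = (\<Sum>x\<in>I1. (c x - c' x) * (if x = x0 then 1 else 0))"
          using dd_I by (intro sum.cong) auto
        also have "\<dots> = c x0 - c' x0" using x0 by (simp add: if_distrib cong: if_cong)
        finally show ?thesis by simp
      qed
      thus "c = c'" using out by (auto simp: fun_eq_iff)
    qed
    show "(\<lambda>c. restrict c (UNIV - I1)) ` ?C = (UNIV - I1) \<rightarrow>\<^sub>E K"
    proof (intro equalityI subsetI)
      fix v assume "v \<in> (\<lambda>c. restrict c (UNIV - I1)) ` ?C"
      then obtain c where "c \<in> ?C" "v = restrict c (UNIV - I1)" by blast
      thus "v \<in> (UNIV - I1) \<rightarrow>\<^sub>E K" unfolding GRM3_iff by auto
    next
      fix v assume v: "v \<in> (UNIV - I1) \<rightarrow>\<^sub>E K"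
      define c where "c x = (if x \<in> I1 then - (\<Sum>y\<in>UNIV - I1. v y * dd x y) else v x)" for x
      have "c \<in> ?C" unfolding GRM3_iff
      proof (intro conjI allI impI)
        fix x show "c x \<in> K" unfolding c_def using v dd_K
          by (auto intro!: K_neg K_sum K_mult)
      next
        fix s assume s: "s < n \<and> wt q s < 3"
        hence sW: "s \<in> W" using W_complete by simp
        define h where "h = PF (\<lambda>t. if t = s then 1 else (0::'e))"
        have hx: "\<And>x. x ^ s = h x" unfolding h_def using monomial[OF sW] by simp
        have "(\<Sum>x\<in>UNIV. c x * x ^ s) = (\<Sum>x\<in>I1. c x * h x) + (\<Sum>y\<in>UNIV - I1. c y * h y)"
          unfolding hx by (rule split_UNIV)
        also have "(\<Sum>y\<in>UNIV - I1. c y * h y) = (\<Sum>y\<in>UNIV - I1. v y * (\<Sum>x\<in>I1. h x * dd x y))"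
          unfolding c_def h_def by (intro sum.cong refl) (simp add: lincomb[symmetric])
        also have "\<dots> = (\<Sum>x\<in>I1. h x * (\<Sum>y\<in>UNIV - I1. v y * dd x y))"
          by (simp add: sum_distrib_left sum_distrib_right sum.swap[of _ "UNIV - I1"] algebra_simps)
        also have "(\<Sum>x\<in>I1. c x * h x) = (\<Sum>x\<in>I1. - (h x * (\<Sum>y\<in>UNIV - I1. v y * dd x y)))"
          by (intro sum.cong refl) (simp add: c_def)
        also have "\<dots> = - (\<Sum>x\<in>I1. h x * (\<Sum>y\<in>UNIV - I1. v y * dd x y))"
          by (simp add: sum_negf)
        finally show "(\<Sum>x\<in>UNIV. c x * x ^ s) = 0" by simp
      qed
      moreover have "restrict c (UNIV - I1) = v"
        using v by (auto simp: fun_eq_iff PiE_def extensional_def c_def)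
      ultimately show "v \<in> (\<lambda>c. restrict c (UNIV - I1)) ` ?C" by (intro image_eqI[of _ _ c]) auto
    qed
  qed
qed

end


theorem mainTheorem7:
  fixes q m n r1 r2 a b :: nat
    and \<alpha> :: "'e::{finite,field}"
    and T :: "nat \<Rightarrow> nat \<times> nat"
    and \<Gamma> :: "(nat \<times> nat) set"
  assumes "prime_power q" and "q > 2" and "m \<ge> 1"
    and "card (UNIV :: 'e set) = q ^ m"
    and "n = q ^ m - 1" and "n = r1 * r2" and "r1 > 1" and "r2 > 1"
    and "coprime r1 r2" and "r1 = q ^ a - 1" and "m = a * b"
    and "(\<lambda>i. \<alpha> ^ i) ` {..<n} = UNIV - {0}"
    and "bij_betw T {..<n} ({..<r1} \<times> {..<r2})"
    and "\<forall>i<n. \<forall>j<n. T ((i + j) mod n) =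
           ((fst (T i) + fst (T j)) mod r1, (snd (T i) + snd (T j)) mod r2)"
    and "\<Gamma> = {(i1, i2). i1 < a * (a - 1) div 2 \<and> i2 < b ^ 2}
          \<union> {(i1, i2). a * (a - 1) div 2 \<le> i1 \<and> i1 < a * (a + 1) div 2 \<and> i2 < b * (b + 1) div 2}
          \<union> {(i1, i2). a * (a + 1) div 2 \<le> i1 \<and> i1 < a * (a + 3) div 2 \<and> i2 < b}"
  shows "info_set (subfield_q q) (GRM q 2 m :: ('e \<Rightarrow> 'e) set)
           ({0} \<union> {\<alpha> ^ i | i. i < n \<and> T i \<in> \<Gamma>}) \<and>
         info_set (subfield_q q) (GRM q (m * (q - 1) - 3) m :: ('e \<Rightarrow> 'e) set)
           {\<alpha> ^ i | i. i < n \<and> T i \<notin> \<Gamma>}"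
proof -
  interpret grmctx q m n r1 r2 a b \<alpha> T \<Gamma>
    by (rule grmctx.intro) (fact assms)+
  have e1: "{0} \<union> {\<alpha> ^ i | i. i < n \<and> T i \<in> \<Gamma>} = I1" unfolding I1_def by auto
  have e2: "{\<alpha> ^ i | i. i < n \<and> T i \<notin> \<Gamma>} = UNIV - I1"
  proof (intro equalityI subsetI)
    fix x assume "x \<in> {\<alpha> ^ i | i. i < n \<and> T i \<notin> \<Gamma>}"
    then obtain i where i: "x = \<alpha> ^ i" "i < n" "T i \<notin> \<Gamma>" by blast
    have "x \<noteq> 0" using i alpha_nz by simp
    moreover have "x \<notin> {\<alpha> ^ i | i. i < n \<and> T i \<in> \<Gamma>}"
    proof
      assume "x \<in> {\<alpha> ^ i | i. i < n \<and> T i \<in> \<Gamma>}"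
      then obtain j where j: "x = \<alpha> ^ j" "j < n" "T j \<in> \<Gamma>" by blast
      have "i = j" using i j alpha_inj by (auto dest: inj_onD)
      thus False using i j by simp
    qed
    ultimately show "x \<in> UNIV - I1" unfolding I1_def by simp
  next
    fix x assume x: "x \<in> UNIV - I1"
    hence "x \<noteq> 0" unfolding I1_def by simp
    then obtain i where i: "i < n" "x = \<alpha> ^ i" using nonzero_alpha by blast
    have "T i \<notin> \<Gamma>" using x i unfolding I1_def by blast
    thus "x \<in> {\<alpha> ^ i | i. i < n \<and> T i \<notin> \<Gamma>}" using i by blast
  qed
  have e3: "subfield_q q = K" by (simp add: K_def)
  show ?thesis unfolding e1 e2 e3 using part1 part2 by simp
qed

end
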